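(* Let $\Pi$ be the $3$-regular sinkless and sourceless orientation problem and let $k\ge0$ be an integer. Then, up to renaming of labels, $\mathcal{Q}^k(\Pi)$ has the following constraints. Here $[X\,Y]$ denotes a position that may hold any label from $\{X,Y\}$. - If $k=0$: node constraint $\mathsf B\,\mathsf C\,[\mathsf B\,\mathsf C]$; edge constraint $\mathsf B\,\mathsf C$. - If $k=1$: node constraint $\mathsf B\,\mathsf C\,\mathsf D$; edge constraint $[\mathsf B\,\mathsf D]\,[\mathsf C\,\mathsf D]$. - If $k\ge2$: the label set is $\{\mathsf B,\mathsf C\}\cup\{\mathsf A_i:1\le i\le k-1\}\cup\{\mathsf D_i:1\le i\le k\}$. - The node constraint consists of $\mathsf B\,\mathsf C\,\mathsf D_k$ and $\mathsf A_i\,\mathsf D_i\,\mathsf D_k$ for each $1\le i\le k-1$. - The edge constraint consists of all configurations in $[\mathsf B\,\mathsf D_1\,\dots\,\mathsf D_k]\,[\mathsf C\,\mathsf D_1\,\dots\,\mathsf D_k]$, together with $\mathsf A_i\,\mathsf D_j$ for each $1\le i<j\le k$.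
   Context: Here $\Delta=3$. A node-edge-checkable problem $\Pi=(\Sigma_\Pi,\mathcal{N}_\Pi,\mathcal{E}_\Pi)$ has a finite label set, a node constraint $\mathcal{N}_\Pi$ (a set of cardinality-$3$ multisets over $\Sigma_\Pi$) and an edge constraint $\mathcal{E}_\Pi$ (a set of cardinality-$2$ multisets). The sinkless and sourceless orientation problem has labels $\{\mathsf I,\mathsf O\}$. Its node configurations contain at least one $\mathsf I$ and at least one $\mathsf O$, and its only edge configuration is $\mathsf I\,\mathsf O$. Round elimination. $\mathrm{R}(\Pi)$ is defined as follows. - $\mathcal{E}_{\mathrm{R}(\Pi)}$ consists of the configurations $S_1S_2$ of nonempty subsets of $\Sigma_\Pi$ with $L_1L_2\in\mathcal{E}_\Pi$ for all $L_i\in S_i$ that are maximal. Maximal means no other such configuration $S'_1S'_2$ has $S_i\subseteq S'_{\rho(i)}$ for a permutation $\rho$. - $\Sigma_{\mathrm{R}(\Pi)}$ is the set of sets occurring there. - $\mathcal{N}_{\mathrm{R}(\Pi)}$ consists of the configurations over $\Sigma_{\mathrm{R}(\Pi)}$ admitting a choice in $\mathcal{N}_\Pi$. $\bar{\mathrm{R}}(\Pi)$ is defined dually. - $\mathcal{N}_{\bar{\mathrm{R}}(\Pi)}$ consists of the maximal configurations of nonempty subsets all of whose choices lie in $\mathcal{N}_\Pi$. - $\Sigma_{\bar{\mathrm{R}}(\Pi)}$ is the set of sets occurring there. - $\mathcal{E}_{\bar{\mathrm{R}}(\Pi)}$ consists of the configurations over $\Sigma_{\bar{\mathrm{R}}(\Pi)}$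 admitting a choice in $\mathcal{E}_\Pi$. $\mathcal{Q}=\bar{\mathrm{R}}\circ\mathrm{R}$, and $\mathcal{Q}^k$ is its $k$-fold iterate. *)

theory Defs
  imports Main "HOL-Library.Multiset" "HOL-Library.FSet"
begin

text \<open>A node-edge-checkable problem (Delta = 3): label set, node constraint
 (multisets of size 3), edge constraint (multisets of size 2).\<close>
type_synonym 'a problem = "'a set \<times> 'a multiset set \<times> 'a multiset set"

definition labels :: "'a problem \<Rightarrow> 'a set" where "labels P = fst P"
definition nodeC :: "'a problem \<Rightarrow> 'a multiset set" where "nodeC P = fst (snd P)"
definition edgeC :: "'a problem \<Rightarrow> 'a multiset set" where "edgeC P = snd (snd P)"

definition is_choice :: "'a multiset \<Rightarrow> 'a set multiset \<Rightarrow> bool" where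
  "is_choice L S \<longleftrightarrow> rel_mset (\<lambda>l X. l \<in> X) L S"

definition all_choices_in :: "'a set multiset \<Rightarrow> 'a multiset set \<Rightarrow> bool" where
  "all_choices_in S C \<longleftrightarrow> (\<forall>L. is_choice L S \<longrightarrow> L \<in> C)"

definition some_choice_in :: "'a set multiset \<Rightarrow> 'a multiset set \<Rightarrow> bool" where
  "some_choice_in S C \<longleftrightarrow> (\<exists>L. is_choice L S \<and> L \<in> C)"

definition set_configs :: "nat \<Rightarrow> 'a set \<Rightarrow> 'a set multiset set" where
  "set_configs n \<Sigma> = {S. size S = n \<and> (\<forall>X\<in>#S. X \<noteq> {} \<and> X \<subseteq> \<Sigma>)}"

definition maximal_in :: "'a set multiset set \<Rightarrow> 'a set multiset \<Rightarrow> bool" where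
  "maximal_in Cs S \<longleftrightarrow> S \<in> Cs \<and> (\<forall>S'\<in>Cs. rel_mset (\<subseteq>) S S' \<longrightarrow> S' = S)"

definition RE :: "'a problem \<Rightarrow> 'a set problem" where
  "RE P = (let E' = {S. maximal_in {T \<in> set_configs 2 (labels P). all_choices_in T (edgeC P)} S};
               \<Sigma>' = (\<Union>S\<in>E'. set_mset S);
               N' = {M. size M = 3 \<and> set_mset M \<subseteq> \<Sigma>' \<and> some_choice_in M (nodeC P)}
           in (\<Sigma>', N', E'))"

definition REbar :: "'a problem \<Rightarrow> 'a set problem" where
  "REbar P = (let N' = {S. maximal_in {T \<in> set_configs 3 (labels P). all_choices_in T (nodeC P)} S};
               \<Sigma>' = (\<Union>S\<in>N'. set_mset S);
               E' = {M. size M = 2 \<and> set_mset M \<subseteq> \<Sigma>' \<and> some_choice_in M (edgeC P)}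
           in (\<Sigma>', N', E'))"

definition rename :: "('a \<Rightarrow> 'b) \<Rightarrow> 'a problem \<Rightarrow> 'b problem" where
  "rename f P = (f ` labels P, image_mset f ` nodeC P, image_mset f ` edgeC P)"

text \<open>A universal label type so that Q can be iterated: new labels (finite sets of
 old labels) are encoded injectively as labels again.\<close>
datatype lab = Atom nat | SetL "lab fset"

definition enc :: "lab set \<Rightarrow> lab" where "enc S = SetL (Abs_fset S)"

definition Q :: "lab problem \<Rightarrow> lab problem" where
  "Q P = rename enc (REbar (rename enc (RE P)))"

text \<open>Sinkless and sourceless orientation, I = Atom 0, O = Atom 1.\<close>
definition SSO :: "lab problem" where
  "SSO = ({Atom 0, Atom 1},
          {M. size M = 3 \<and> set_mset M \<subseteq> {Atom 0, Atom 1} \<and> Atom 0 \<in># M \<and> Atom 1 \<in># M},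
          {{#Atom 0, Atom 1#}})"

datatype tlab = TA nat | TB | TC | TD nat

definition target :: "nat \<Rightarrow> tlab problem" where
  "target k = (if k = 0 then
      ({TB, TC}, {{#TB, TC, TB#}, {#TB, TC, TC#}}, {{#TB, TC#}})
    else
      ({TB, TC} \<union> TA ` {1..k-1} \<union> TD ` {1..k},
       {{#TB, TC, TD k#}} \<union> {{#TA i, TD i, TD k#} | i. 1 \<le> i \<and> i \<le> k - 1},
       {{#x, y#} | x y. x \<in> insert TB (TD ` {1..k}) \<and> y \<in> insert TC (TD ` {1..k})}
        \<union> {{#TA i, TD j#} | i j. 1 \<le> i \<and> i < j \<and> j \<le> k}))"

definition iso_problem :: "'a problem \<Rightarrow> 'b problem \<Rightarrow> bool" where
  "iso_problem P T \<longleftrightarrow> (\<exists>f. bij_betw f (labels P) (labels T)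
       \<and> image_mset f ` nodeC P = nodeC T \<and> image_mset f ` edgeC P = edgeC T)"

end

theory Submission
  imports Defs
begin


lemma sizeSuc: "size M = Suc n \<Longrightarrow> \<exists>a N. M = add_mset a N \<and> size N = n"
  by (metis size_eq_Suc_imp_eq_union size_add_mset nat.inject)

lemma size2_eq: "size M = 2 \<Longrightarrow> \<exists>a b. M = {#a,b#}"
proof -
  assume "size M = 2"
  then obtain a N where "M = add_mset a N" "size N = 1" using sizeSuc[of M 1] by auto
  then show ?thesis using size_1_singleton_mset by blast
qed

lemma size3_eq: "size M = 3 \<Longrightarrow> \<exists>a b c. M = {#a,b,c#}"
proof -
  assume "size M = 3"
  then obtain a N where "M = add_mset a N" "size N = 2" using sizeSuc[of M 2] by (auto simp: numeral_3_eq_3)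
  then show ?thesis using size2_eq by blast
qed

lemma mset2_eq: "{#a,b#} = {#x,y#} \<longleftrightarrow> (a=x \<and> b=y) \<or> (a=y \<and> b=x)"
  by (auto simp: add_eq_conv_ex)

lemma mset3_eq: "{#a,b,c#} = {#x,y,z#} \<longleftrightarrow> (a=x \<and> b=y \<and> c=z) \<or> (a=x \<and> b=z \<and> c=y) \<or> (a=y \<and> b=x \<and> c=z)
   \<or> (a=y \<and> b=z \<and> c=x) \<or> (a=z \<and> b=x \<and> c=y) \<or> (a=z \<and> b=y \<and> c=x)"
  (is "?l = ?r")
proof
  assume ?l
  then have "a \<in># {#x,y,z#}" by (metis union_single_eq_member)
  then have "a = x \<or> a = y \<or> a = z" by auto
  moreover have "{#x,y,z#} = add_mset y {#x,z#}" "{#x,y,z#} = add_mset z {#x,y#}"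
    by (auto simp: add_mset_commute)
  ultimately show ?r using \<open>?l\<close>
  proof (elim disjE)
    assume "a = x" with \<open>?l\<close> have "{#b,c#} = {#y,z#}" by simp
    then show ?r using \<open>a = x\<close> unfolding mset2_eq by blast
  next
    assume "a = y" "{#x,y,z#} = add_mset y {#x,z#}"
    with \<open>?l\<close> have "{#b,c#} = {#x,z#}" by simp
    then show ?r using \<open>a = y\<close> unfolding mset2_eq by blast
  next
    assume "a = z" "{#x,y,z#} = add_mset z {#x,y#}"
    with \<open>?l\<close> have "{#b,c#} = {#x,y#}" by simp
    then show ?r using \<open>a = z\<close> unfolding mset2_eq by blast
  qed
next
  assume ?r then show ?l by (auto simp: add_mset_commute)
qed
lemma rel1R: "rel_mset R L {#x#} \<longleftrightarrow> (\<exists>a. L = {#a#} \<and> R a x)"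
proof
  assume "rel_mset R L {#x#}"
  then show "\<exists>a. L = {#a#} \<and> R a x" using msed_rel_invR[of R L x "{#}"] by auto
next
  assume "\<exists>a. L = {#a#} \<and> R a x"
  then show "rel_mset R L {#x#}" using rel_mset_Plus[OF _ rel_mset_Zero] by auto
qed

lemma relR_add: "rel_mset R L (add_mset x N) \<longleftrightarrow> (\<exists>a L'. L = add_mset a L' \<and> R a x \<and> rel_mset R L' N)"
  using msed_rel_invR[of R L x N] rel_mset_Plus by metis

lemma relL_add: "rel_mset R (add_mset x N) L \<longleftrightarrow> (\<exists>a L'. L = add_mset a L' \<and> R x a \<and> rel_mset R N L')"
  using msed_rel_invL[of R x N L] rel_mset_Plus by metis

lemma rel2R: "rel_mset R L {#x,y#} \<longleftrightarrow> (\<exists>a b. L = {#a,b#} \<and> R a x \<and> R b y)"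
  by (auto simp: relR_add rel1R)

lemma rel3R: "rel_mset R L {#x,y,z#} \<longleftrightarrow> (\<exists>a b c. L = {#a,b,c#} \<and> R a x \<and> R b y \<and> R c z)"
  unfolding relR_add[of R L x] rel2R by blast

lemma rel2L: "rel_mset R {#x,y#} L \<longleftrightarrow> (\<exists>a b. L = {#a,b#} \<and> R x a \<and> R y b)"
  by (auto simp: relL_add relR_add rel1R)

lemma rel3L: "rel_mset R {#x,y,z#} L \<longleftrightarrow> (\<exists>a b c. L = {#a,b,c#} \<and> R x a \<and> R y b \<and> R z c)"
  unfolding relL_add[of R x] rel2L by blast

lemma all2: "all_choices_in {#X,Y#} C \<longleftrightarrow> (\<forall>a\<in>X. \<forall>b\<in>Y. {#a,b#} \<in> C)"
  unfolding all_choices_in_def is_choice_def rel2R by blast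

lemma all3: "all_choices_in {#X,Y,Z#} C \<longleftrightarrow> (\<forall>a\<in>X. \<forall>b\<in>Y. \<forall>c\<in>Z. {#a,b,c#} \<in> C)"
  unfolding all_choices_in_def is_choice_def rel3R by blast

lemma some2: "some_choice_in {#X,Y#} C \<longleftrightarrow> (\<exists>a\<in>X. \<exists>b\<in>Y. {#a,b#} \<in> C)"
  unfolding some_choice_in_def is_choice_def rel2R by blast

lemma some3: "some_choice_in {#X,Y,Z#} C \<longleftrightarrow> (\<exists>a\<in>X. \<exists>b\<in>Y. \<exists>c\<in>Z. {#a,b,c#} \<in> C)"
  unfolding some_choice_in_def is_choice_def rel3R by blast


definition WF :: "'a problem \<Rightarrow> bool" where
  "WF P \<longleftrightarrow> (\<forall>M\<in>nodeC P. set_mset M \<subseteq> labels P) \<and> (\<forall>M\<in>edgeC P. set_mset M \<subseteq> labels P)"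

lemma labels_rename[simp]: "labels (rename f P) = f ` labels P"
  and nodeC_rename[simp]: "nodeC (rename f P) = image_mset f ` nodeC P"
  and edgeC_rename[simp]: "edgeC (rename f P) = image_mset f ` edgeC P"
  by (simp_all add: rename_def labels_def nodeC_def edgeC_def)

lemma problem_eq: "P = (labels P, nodeC P, edgeC P)"
  by (simp add: labels_def nodeC_def edgeC_def)

lemma problem_eqI: "labels P = labels T \<Longrightarrow> nodeC P = nodeC T \<Longrightarrow> edgeC P = edgeC T \<Longrightarrow> P = T"
  by (metis problem_eq)

lemma rename_rename: "rename g (rename f P) = rename (g \<circ> f) P"
  by (rule problem_eqI) (auto simp: image_image multiset.map_comp)

lemma WF_rename: "WF P \<Longrightarrow> WF (rename f P)"
  unfolding WF_def by auto

lemma RE_parts: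
  "edgeC (RE P) = {S. maximal_in {T \<in> set_configs 2 (labels P). all_choices_in T (edgeC P)} S}"
  "labels (RE P) = (\<Union>S\<in>edgeC (RE P). set_mset S)"
  "nodeC (RE P) = {M. size M = 3 \<and> set_mset M \<subseteq> labels (RE P) \<and> some_choice_in M (nodeC P)}"
  by (simp_all add: RE_def Let_def labels_def nodeC_def edgeC_def)

lemma REbar_parts:
  "nodeC (REbar P) = {S. maximal_in {T \<in> set_configs 3 (labels P). all_choices_in T (nodeC P)} S}"
  "labels (REbar P) = (\<Union>S\<in>nodeC (REbar P). set_mset S)"
  "edgeC (REbar P) = {M. size M = 2 \<and> set_mset M \<subseteq> labels (REbar P) \<and> some_choice_in M (edgeC P)}"
  by (simp_all add: REbar_def Let_def labels_def nodeC_def edgeC_def)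

lemma WF_RE: "WF (RE P)"
  unfolding WF_def by (auto simp: RE_parts(2) RE_parts(3))

lemma WF_REbar: "WF (REbar P)"
  unfolding WF_def by (auto simp: REbar_parts(2) REbar_parts(3))

lemma labels_RE_Pow: "labels (RE P) \<subseteq> Pow (labels P)"
  by (auto simp: RE_parts(1,2) maximal_in_def set_configs_def)

lemma labels_REbar_Pow: "labels (REbar P) \<subseteq> Pow (labels P)"
  by (auto simp: REbar_parts(1,2) maximal_in_def set_configs_def)

lemma inv_image_mset:
  assumes "inj_on f L" "set_mset M \<subseteq> L"
  shows "image_mset (inv_into L f) (image_mset f M) = M"
proof -
  have "image_mset (inv_into L f \<circ> f) M = image_mset id M"
    by (rule image_mset_cong) (use assms in \<open>auto simp: inv_into_f_f\<close>)
  then show ?thesis by (simp add: multiset.map_comp)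
qed

lemma inj_image_mset:
  assumes "inj_on f L" "set_mset M \<subseteq> L" "set_mset M' \<subseteq> L" "image_mset f M = image_mset f M'"
  shows "M = M'"
  using inv_image_mset[OF assms(1,2)] inv_image_mset[OF assms(1,3)] assms(4) by metis

lemma image_mset_surj:
  assumes "set_mset M \<subseteq> h ` A"
  shows "\<exists>M0. set_mset M0 \<subseteq> A \<and> M = image_mset h M0"
proof (intro exI conjI)
  show "set_mset (image_mset (inv_into A h) M) \<subseteq> A"
    using assms by (auto intro: inv_into_into)
  have "image_mset (h \<circ> inv_into A h) M = image_mset id M"
    by (rule image_mset_cong) (use assms in \<open>auto simp: f_inv_into_f\<close>)
  then show "M = image_mset h (image_mset (inv_into A h) M)" by (simp add: multiset.map_comp)
qed

lemma inj_subset_iff: "inj_on f L \<Longrightarrow> X \<subseteq> L \<Longrightarrow> Y \<subseteq> L \<Longrightarrow> f ` X \<subseteq> f ` Y \<longleftrightarrow> X \<subseteq> Y"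
proof
  assume a: "inj_on f L" "X \<subseteq> L" "Y \<subseteq> L" "f ` X \<subseteq> f ` Y"
  show "X \<subseteq> Y"
  proof
    fix t assume "t \<in> X"
    then have "f t \<in> f ` Y" "t \<in> L" using a by auto
    then show "t \<in> Y" using inj_on_image_mem_iff[OF a(1) _ a(3)] by blast
  qed
qed auto

lemma set_configs_rename:
  assumes "inj_on f L"
  shows "set_configs n (f ` L) = image_mset (image f) ` set_configs n L"
proof
  show "image_mset (image f) ` set_configs n L \<subseteq> set_configs n (f ` L)"
  proof
    fix T assume "T \<in> image_mset (image f) ` set_configs n L"
    then obtain T0 where T0: "T0 \<in> set_configs n L" "T = image_mset (image f) T0" by blast
    have "\<forall>X\<in>#T. X \<noteq> {} \<and> X \<subseteq> f ` L"
      using T0 unfolding set_configs_def by auto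
    moreover have "size T = n" using T0 unfolding set_configs_def by simp
    ultimately show "T \<in> set_configs n (f ` L)" unfolding set_configs_def by blast
  qed
next
  show "set_configs n (f ` L) \<subseteq> image_mset (image f) ` set_configs n L"
  proof
    fix T assume T: "T \<in> set_configs n (f ` L)"
    have "set_mset T \<subseteq> image f ` {X. X \<noteq> {} \<and> X \<subseteq> L}"
    proof
      fix X' assume "X' \<in># T"
      then have ne: "X' \<noteq> {}" and sub: "X' \<subseteq> f ` L" using T unfolding set_configs_def by auto
      have e: "X' = f ` (L \<inter> f -` X')" using sub by blast
      with ne have "L \<inter> f -` X' \<noteq> {}" by blast
      with e show "X' \<in> image f ` {X. X \<noteq> {} \<and> X \<subseteq> L}" by blast
    qed
    from image_mset_surj[OF this] obtain T0
      where T0: "set_mset T0 \<subseteq> {X. X \<noteq> {} \<and> X \<subseteq> L}" "T = image_mset (image f) T0"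
      by blast
    have "size T0 = n" using T T0(2) unfolding set_configs_def by simp
    then have "T0 \<in> set_configs n L" using T0(1) unfolding set_configs_def by blast
    then show "T \<in> image_mset (image f) ` set_configs n L"
      using T0(2) by blast
  qed
qed

lemma all2_rename:
  assumes "inj_on f L" "\<forall>M\<in>C. set_mset M \<subseteq> L" "X \<subseteq> L" "Y \<subseteq> L"
  shows "all_choices_in {#f ` X, f ` Y#} (image_mset f ` C) \<longleftrightarrow> all_choices_in {#X,Y#} C"
proof -
  have "{#f a, f b#} \<in> image_mset f ` C \<longleftrightarrow> {#a,b#} \<in> C" if "a \<in> L" "b \<in> L" for a b
  proof
    assume "{#f a, f b#} \<in> image_mset f ` C"
    then obtain M where "M \<in> C" "image_mset f M = image_mset f {#a,b#}" by auto
    then have "M = {#a,b#}" using inj_image_mset[OF assms(1)] assms(2) that by auto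
    then show "{#a,b#} \<in> C" using \<open>M \<in> C\<close> by simp
  next
    assume "{#a,b#} \<in> C" then show "{#f a, f b#} \<in> image_mset f ` C"
      by (intro image_eqI[where x="{#a,b#}"]) simp_all
  qed
  then show ?thesis using assms(3,4) unfolding all2 by (auto simp: subset_iff)
qed

lemma all3_rename:
  assumes "inj_on f L" "\<forall>M\<in>C. set_mset M \<subseteq> L" "X \<subseteq> L" "Y \<subseteq> L" "Z \<subseteq> L"
  shows "all_choices_in {#f ` X, f ` Y, f ` Z#} (image_mset f ` C) \<longleftrightarrow> all_choices_in {#X,Y,Z#} C"
proof -
  have "{#f a, f b, f c#} \<in> image_mset f ` C \<longleftrightarrow> {#a,b,c#} \<in> C" if "a \<in> L" "b \<in> L" "c \<in> L" for a b c
  proof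
    assume "{#f a, f b, f c#} \<in> image_mset f ` C"
    then obtain M where "M \<in> C" "image_mset f M = image_mset f {#a,b,c#}" by auto
    then have "M = {#a,b,c#}" using inj_image_mset[OF assms(1)] assms(2) that by auto
    then show "{#a,b,c#} \<in> C" using \<open>M \<in> C\<close> by simp
  next
    assume "{#a,b,c#} \<in> C" then show "{#f a, f b, f c#} \<in> image_mset f ` C"
      by (intro image_eqI[where x="{#a,b,c#}"]) simp_all
  qed
  then show ?thesis using assms(3,4,5) unfolding all3 by (auto simp: subset_iff)
qed

lemma some2_rename:
  assumes "inj_on f L" "\<forall>M\<in>C. set_mset M \<subseteq> L" "X \<subseteq> L" "Y \<subseteq> L"
  shows "some_choice_in {#f ` X, f ` Y#} (image_mset f ` C) \<longleftrightarrow> some_choice_in {#X,Y#} C"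
proof -
  have "{#f a, f b#} \<in> image_mset f ` C \<longleftrightarrow> {#a,b#} \<in> C" if "a \<in> L" "b \<in> L" for a b
  proof
    assume "{#f a, f b#} \<in> image_mset f ` C"
    then obtain M where "M \<in> C" "image_mset f M = image_mset f {#a,b#}" by auto
    then have "M = {#a,b#}" using inj_image_mset[OF assms(1)] assms(2) that by auto
    then show "{#a,b#} \<in> C" using \<open>M \<in> C\<close> by simp
  next
    assume "{#a,b#} \<in> C" then show "{#f a, f b#} \<in> image_mset f ` C"
      by (intro image_eqI[where x="{#a,b#}"]) simp_all
  qed
  then show ?thesis using assms(3,4) unfolding some2 by (auto simp: subset_iff)
qed

lemma some3_rename:
  assumes "inj_on f L" "\<forall>M\<in>C. set_mset M \<subseteq> L" "X \<subseteq> L" "Y \<subseteq> L" "Z \<subseteq> L"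
  shows "some_choice_in {#f ` X, f ` Y, f ` Z#} (image_mset f ` C) \<longleftrightarrow> some_choice_in {#X,Y,Z#} C"
proof -
  have "{#f a, f b, f c#} \<in> image_mset f ` C \<longleftrightarrow> {#a,b,c#} \<in> C" if "a \<in> L" "b \<in> L" "c \<in> L" for a b c
  proof
    assume "{#f a, f b, f c#} \<in> image_mset f ` C"
    then obtain M where "M \<in> C" "image_mset f M = image_mset f {#a,b,c#}" by auto
    then have "M = {#a,b,c#}" using inj_image_mset[OF assms(1)] assms(2) that by auto
    then show "{#a,b,c#} \<in> C" using \<open>M \<in> C\<close> by simp
  next
    assume "{#a,b,c#} \<in> C" then show "{#f a, f b, f c#} \<in> image_mset f ` C"
      by (intro image_eqI[where x="{#a,b,c#}"]) simp_all
  qed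
  then show ?thesis using assms(3,4,5) unfolding some3 by (auto simp: subset_iff)
qed

lemma maximal_rename:
  assumes "inj_on f L" "\<forall>T\<in>G. \<forall>X\<in>#T. X \<subseteq> L"
  shows "{S. maximal_in (image_mset (image f) ` G) S} = image_mset (image f) ` {S. maximal_in G S}"
proof -
  let ?h = "image f"
  have injh: "inj_on ?h (Pow L)" using assms(1) by (rule inj_on_image_Pow)
  have rel: "rel_mset (\<subseteq>) (image_mset ?h S) (image_mset ?h S') \<longleftrightarrow> rel_mset (\<subseteq>) S S'"
    if "S \<in> G" "S' \<in> G" for S S'
  proof -
    have "rel_mset (\<subseteq>) (image_mset ?h S) (image_mset ?h S') \<longleftrightarrow> rel_mset (\<lambda>X Y. f ` X \<subseteq> f ` Y) S S'"
      by (simp add: multiset.rel_map)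
    also have "\<dots> \<longleftrightarrow> rel_mset (\<subseteq>) S S'"
    proof
      assume "rel_mset (\<lambda>X Y. f ` X \<subseteq> f ` Y) S S'"
      then show "rel_mset (\<subseteq>) S S'"
      proof (rule multiset.rel_mono_strong)
        fix X Y assume "X \<in># S" "Y \<in># S'" "f ` X \<subseteq> f ` Y"
        then show "X \<subseteq> Y" using assms that inj_subset_iff[OF assms(1), of X Y] by blast
      qed
    next
      assume "rel_mset (\<subseteq>) S S'"
      then show "rel_mset (\<lambda>X Y. f ` X \<subseteq> f ` Y) S S'"
        by (rule multiset.rel_mono_strong) (rule image_mono)
    qed
    finally show ?thesis .
  qed
  have eq: "image_mset ?h S = image_mset ?h S' \<longleftrightarrow> S = S'" if "S \<in> G" "S' \<in> G" for S S'
    using inj_image_mset[OF injh, of S S'] assms(2) that by auto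
  show ?thesis
  proof
    show "{S. maximal_in (image_mset ?h ` G) S} \<subseteq> image_mset ?h ` {S. maximal_in G S}"
    proof
      fix S' assume "S' \<in> {S. maximal_in (image_mset ?h ` G) S}"
      then obtain S where S: "S \<in> G" "S' = image_mset ?h S"
        and m: "\<forall>T\<in>image_mset ?h ` G. rel_mset (\<subseteq>) S' T \<longrightarrow> T = S'"
        unfolding maximal_in_def by auto
      have "maximal_in G S" unfolding maximal_in_def
      proof (intro conjI ballI impI)
        fix T assume T: "T \<in> G" "rel_mset (\<subseteq>) S T"
        then have "rel_mset (\<subseteq>) S' (image_mset ?h T)" using rel[OF S(1) T(1)] S(2) by simp
        then have "image_mset ?h T = image_mset ?h S" using m T(1) S(2) by blast
        then show "T = S" using eq[OF T(1) S(1)] by simp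
      qed (rule S(1))
      then show "S' \<in> image_mset ?h ` {S. maximal_in G S}" using S by auto
    qed
  next
    show "image_mset ?h ` {S. maximal_in G S} \<subseteq> {S. maximal_in (image_mset ?h ` G) S}"
    proof
      fix S' assume "S' \<in> image_mset ?h ` {S. maximal_in G S}"
      then obtain S where S: "S \<in> G" "S' = image_mset ?h S"
        and m: "\<forall>T\<in>G. rel_mset (\<subseteq>) S T \<longrightarrow> T = S"
        unfolding maximal_in_def by auto
      have "maximal_in (image_mset ?h ` G) S'" unfolding maximal_in_def
      proof (intro conjI ballI impI)
        show "S' \<in> image_mset ?h ` G" using S by simp
        fix T' assume T': "T' \<in> image_mset ?h ` G" "rel_mset (\<subseteq>) S' T'"
        then obtain T where T: "T \<in> G" "T' = image_mset ?h T" by auto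
        then have "rel_mset (\<subseteq>) S T" using rel[OF S(1) T(1)] S(2) T'(2) by simp
        then have "T = S" using m T(1) by blast
        then show "T' = S'" using T S by simp
      qed
      then show "S' \<in> {S. maximal_in (image_mset ?h ` G) S}" by simp
    qed
  qed
qed


lemma RE_rename:
  assumes wf: "WF P" and inj: "inj_on f (labels P)"
  shows "RE (rename f P) = rename (image f) (RE P)"
proof -
  let ?L = "labels P" and ?h = "image f"
  let ?G = "{T \<in> set_configs 2 ?L. all_choices_in T (edgeC P)}"
  have wfE: "\<forall>M\<in>edgeC P. set_mset M \<subseteq> ?L" and wfN: "\<forall>M\<in>nodeC P. set_mset M \<subseteq> ?L"
    using wf unfolding WF_def by auto
  have good: "{T \<in> set_configs 2 (f ` ?L). all_choices_in T (image_mset f ` edgeC P)} = image_mset ?h ` ?G"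
  proof -
    have "all_choices_in (image_mset ?h T0) (image_mset f ` edgeC P) \<longleftrightarrow> all_choices_in T0 (edgeC P)"
      if "T0 \<in> set_configs 2 ?L" for T0
    proof -
      have "size T0 = 2" using that by (simp add: set_configs_def)
      then obtain X Y where "T0 = {#X,Y#}" using size2_eq by blast
      moreover have "X \<subseteq> ?L" "Y \<subseteq> ?L" using that calculation by (auto simp: set_configs_def)
      ultimately show ?thesis using all2_rename[OF inj wfE] by simp
    qed
    then show ?thesis using set_configs_rename[OF inj, of 2] by auto
  qed
  have E: "edgeC (RE (rename f P)) = image_mset ?h ` edgeC (RE P)"
    unfolding RE_parts(1) labels_rename edgeC_rename good
    by (rule maximal_rename[OF inj]) (auto simp: set_configs_def)
  have Lab: "labels (RE (rename f P)) = ?h ` labels (RE P)"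
    unfolding RE_parts(2)[of "rename f P"] RE_parts(2)[of P] E by auto
  have LP: "labels (RE P) \<subseteq> Pow ?L" by (rule labels_RE_Pow)
  have N: "nodeC (RE (rename f P)) = image_mset ?h ` nodeC (RE P)"
  proof
    show "nodeC (RE (rename f P)) \<subseteq> image_mset ?h ` nodeC (RE P)"
    proof
      fix M assume "M \<in> nodeC (RE (rename f P))"
      then have M: "size M = 3" "set_mset M \<subseteq> ?h ` labels (RE P)"
        "some_choice_in M (image_mset f ` nodeC P)"
        unfolding RE_parts(3)[of "rename f P"] Lab by auto
      from image_mset_surj[OF M(2)] obtain M0 where M0: "set_mset M0 \<subseteq> labels (RE P)" "M = image_mset ?h M0"
        by blast
      then have "size M0 = 3" using M(1) by simp
      then obtain X Y Z where XYZ: "M0 = {#X,Y,Z#}" using size3_eq by blast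
      then have sub: "X \<subseteq> ?L" "Y \<subseteq> ?L" "Z \<subseteq> ?L" using M0(1) LP by auto
      have "some_choice_in M0 (nodeC P)"
        using M(3) some3_rename[OF inj wfN sub] unfolding M0(2) XYZ by simp
      then have "M0 \<in> nodeC (RE P)" unfolding RE_parts(3)[of P] using M0(1) \<open>size M0 = 3\<close> by blast
      then show "M \<in> image_mset ?h ` nodeC (RE P)" using M0(2) by blast
    qed
  next
    show "image_mset ?h ` nodeC (RE P) \<subseteq> nodeC (RE (rename f P))"
    proof
      fix M assume "M \<in> image_mset ?h ` nodeC (RE P)"
      then obtain M0 where M0: "M0 \<in> nodeC (RE P)" "M = image_mset ?h M0" by blast
      then have M0': "size M0 = 3" "set_mset M0 \<subseteq> labels (RE P)" "some_choice_in M0 (nodeC P)"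
        unfolding RE_parts(3)[of P] by auto
      then obtain X Y Z where XYZ: "M0 = {#X,Y,Z#}" using size3_eq by blast
      then have sub: "X \<subseteq> ?L" "Y \<subseteq> ?L" "Z \<subseteq> ?L" using M0'(2) LP by auto
      have "some_choice_in M (image_mset f ` nodeC P)"
        using M0'(3) some3_rename[OF inj wfN sub] unfolding M0(2) XYZ by simp
      moreover have "size M = 3" "set_mset M \<subseteq> labels (RE (rename f P))"
        using M0'(1,2) M0(2) Lab by auto
      ultimately show "M \<in> nodeC (RE (rename f P))"
        unfolding RE_parts(3)[of "rename f P"] by simp
    qed
  qed
  show ?thesis by (rule problem_eqI) (simp_all add: Lab N E)
qed

lemma REbar_rename:
  assumes wf: "WF P" and inj: "inj_on f (labels P)"
  shows "REbar (rename f P) = rename (image f) (REbar P)"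
proof -
  let ?L = "labels P" and ?h = "image f"
  let ?G = "{T \<in> set_configs 3 ?L. all_choices_in T (nodeC P)}"
  have wfE: "\<forall>M\<in>edgeC P. set_mset M \<subseteq> ?L" and wfN: "\<forall>M\<in>nodeC P. set_mset M \<subseteq> ?L"
    using wf unfolding WF_def by auto
  have good: "{T \<in> set_configs 3 (f ` ?L). all_choices_in T (image_mset f ` nodeC P)} = image_mset ?h ` ?G"
  proof -
    have "all_choices_in (image_mset ?h T0) (image_mset f ` nodeC P) \<longleftrightarrow> all_choices_in T0 (nodeC P)"
      if "T0 \<in> set_configs 3 ?L" for T0
    proof -
      have "size T0 = 3" using that by (simp add: set_configs_def)
      then obtain X Y Z where "T0 = {#X,Y,Z#}" using size3_eq by blast
      moreover have "X \<subseteq> ?L" "Y \<subseteq> ?L" "Z \<subseteq> ?L" using that calculation by (auto simp: set_configs_def)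
      ultimately show ?thesis using all3_rename[OF inj wfN] by simp
    qed
    then show ?thesis using set_configs_rename[OF inj, of 3] by auto
  qed
  have N: "nodeC (REbar (rename f P)) = image_mset ?h ` nodeC (REbar P)"
    unfolding REbar_parts(1) labels_rename nodeC_rename good
    by (rule maximal_rename[OF inj]) (auto simp: set_configs_def)
  have Lab: "labels (REbar (rename f P)) = ?h ` labels (REbar P)"
    unfolding REbar_parts(2)[of "rename f P"] REbar_parts(2)[of P] N by auto
  have LP: "labels (REbar P) \<subseteq> Pow ?L" by (rule labels_REbar_Pow)
  have E: "edgeC (REbar (rename f P)) = image_mset ?h ` edgeC (REbar P)"
  proof
    show "edgeC (REbar (rename f P)) \<subseteq> image_mset ?h ` edgeC (REbar P)"
    proof
      fix M assume "M \<in> edgeC (REbar (rename f P))"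
      then have M: "size M = 2" "set_mset M \<subseteq> ?h ` labels (REbar P)"
        "some_choice_in M (image_mset f ` edgeC P)"
        unfolding REbar_parts(3)[of "rename f P"] Lab by auto
      from image_mset_surj[OF M(2)] obtain M0 where M0: "set_mset M0 \<subseteq> labels (REbar P)" "M = image_mset ?h M0"
        by blast
      then have "size M0 = 2" using M(1) by simp
      then obtain X Y where XY: "M0 = {#X,Y#}" using size2_eq by blast
      then have sub: "X \<subseteq> ?L" "Y \<subseteq> ?L" using M0(1) LP by auto
      have "some_choice_in M0 (edgeC P)"
        using M(3) some2_rename[OF inj wfE sub] unfolding M0(2) XY by simp
      then have "M0 \<in> edgeC (REbar P)" unfolding REbar_parts(3)[of P] using M0(1) \<open>size M0 = 2\<close> by blast
      then show "M \<in> image_mset ?h ` edgeC (REbar P)" using M0(2) by blast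
    qed
  next
    show "image_mset ?h ` edgeC (REbar P) \<subseteq> edgeC (REbar (rename f P))"
    proof
      fix M assume "M \<in> image_mset ?h ` edgeC (REbar P)"
      then obtain M0 where M0: "M0 \<in> edgeC (REbar P)" "M = image_mset ?h M0" by blast
      then have M0': "size M0 = 2" "set_mset M0 \<subseteq> labels (REbar P)" "some_choice_in M0 (edgeC P)"
        unfolding REbar_parts(3)[of P] by auto
      then obtain X Y where XY: "M0 = {#X,Y#}" using size2_eq by blast
      then have sub: "X \<subseteq> ?L" "Y \<subseteq> ?L" using M0'(2) LP by auto
      have "some_choice_in M (image_mset f ` edgeC P)"
        using M0'(3) some2_rename[OF inj wfE sub] unfolding M0(2) XY by simp
      moreover have "size M = 2" "set_mset M \<subseteq> labels (REbar (rename f P))"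
        using M0'(1,2) M0(2) Lab by auto
      ultimately show "M \<in> edgeC (REbar (rename f P))"
        unfolding REbar_parts(3)[of "rename f P"] by simp
    qed
  qed
  show ?thesis by (rule problem_eqI) (simp_all add: Lab N E)
qed


lemma rel3I: "R a x \<Longrightarrow> R b y \<Longrightarrow> R c z \<Longrightarrow> rel_mset R {#a,b,c#} {#x,y,z#}"
  unfolding rel3L by blast

lemma rel2I: "R a x \<Longrightarrow> R b y \<Longrightarrow> rel_mset R {#a,b#} {#x,y#}"
  unfolding rel2L by blast

lemma RE_compute:
  fixes P :: "'a problem" and Tc :: "'a \<Rightarrow> 'a \<Rightarrow> bool" and PR :: "('a set \<times> 'a set) set"
  assumes edges: "\<And>x y. x \<in> labels P \<Longrightarrow> y \<in> labels P \<Longrightarrow> {#x,y#} \<in> edgeC P \<longleftrightarrow> Tc x y"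
    and pr_ok: "\<And>X Y. (X,Y) \<in> PR \<Longrightarrow> X \<noteq> {} \<and> Y \<noteq> {} \<and> X \<subseteq> labels P \<and> Y \<subseteq> labels P \<and> (\<forall>x\<in>X. \<forall>y\<in>Y. Tc x y)"
    and cl1: "\<And>X Y x. (X,Y) \<in> PR \<Longrightarrow> x \<in> labels P \<Longrightarrow> (\<forall>y\<in>Y. Tc x y) \<Longrightarrow> x \<in> X"
    and cl2: "\<And>X Y y. (X,Y) \<in> PR \<Longrightarrow> y \<in> labels P \<Longrightarrow> (\<forall>x\<in>X. Tc x y) \<Longrightarrow> y \<in> Y"
    and dom: "\<And>X Y. X \<noteq> {} \<Longrightarrow> Y \<noteq> {} \<Longrightarrow> X \<subseteq> labels P \<Longrightarrow> Y \<subseteq> labels P \<Longrightarrow> (\<forall>x\<in>X. \<forall>y\<in>Y. Tc x y)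
       \<Longrightarrow> \<exists>(X',Y')\<in>PR. (X \<subseteq> X' \<and> Y \<subseteq> Y') \<or> (X \<subseteq> Y' \<and> Y \<subseteq> X')"
  shows "edgeC (RE P) = (\<lambda>(X,Y). {#X,Y#}) ` PR"
proof -
  let ?L = "labels P"
  let ?G = "{T \<in> set_configs 2 ?L. all_choices_in T (edgeC P)}"
  have memG: "{#X,Y#} \<in> ?G \<longleftrightarrow> X \<noteq> {} \<and> Y \<noteq> {} \<and> X \<subseteq> ?L \<and> Y \<subseteq> ?L \<and> (\<forall>x\<in>X. \<forall>y\<in>Y. Tc x y)" for X Y
  proof
    assume a: "{#X,Y#} \<in> ?G"
    then have b: "X \<noteq> {}" "Y \<noteq> {}" "X \<subseteq> ?L" "Y \<subseteq> ?L" by (auto simp: set_configs_def)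
    have ac: "all_choices_in {#X,Y#} (edgeC P)" using a by simp
    have "\<forall>x\<in>X. \<forall>y\<in>Y. Tc x y"
    proof (intro ballI)
      fix x y assume xyz: "x \<in> X" "y \<in> Y"
      then have "{#x,y#} \<in> edgeC P" using ac unfolding all2 by blast
      moreover have "x \<in> ?L" "y \<in> ?L" using xyz b by auto
      ultimately show "Tc x y" using edges by blast
    qed
    then show "X \<noteq> {} \<and> Y \<noteq> {} \<and> X \<subseteq> ?L \<and> Y \<subseteq> ?L \<and> (\<forall>x\<in>X. \<forall>y\<in>Y. Tc x y)"
      using b by blast
  next
    assume b: "X \<noteq> {} \<and> Y \<noteq> {} \<and> X \<subseteq> ?L \<and> Y \<subseteq> ?L \<and> (\<forall>x\<in>X. \<forall>y\<in>Y. Tc x y)"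
    have "all_choices_in {#X,Y#} (edgeC P)" unfolding all2
    proof (intro ballI)
      fix x y assume "x \<in> X" "y \<in> Y"
      then show "{#x,y#} \<in> edgeC P" using b edges[of x y] by blast
    qed
    moreover have "{#X,Y#} \<in> set_configs 2 ?L" using b by (auto simp: set_configs_def)
    ultimately show "{#X,Y#} \<in> ?G" by blast
  qed
  have Gform: "\<exists>X Y. T = {#X,Y#}" if "T \<in> ?G" for T
    using that size2_eq by (auto simp: set_configs_def)
  show ?thesis
  proof
    show "edgeC (RE P) \<subseteq> (\<lambda>(X,Y). {#X,Y#}) ` PR"
    proof
      fix S assume "S \<in> edgeC (RE P)"
      then have m: "S \<in> ?G" "\<forall>S'\<in>?G. rel_mset (\<subseteq>) S S' \<longrightarrow> S' = S"
        unfolding RE_parts(1) maximal_in_def by auto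
      obtain X Y where S: "S = {#X,Y#}" using Gform[OF m(1)] by blast
      have "X \<noteq> {} \<and> Y \<noteq> {} \<and> X \<subseteq> ?L \<and> Y \<subseteq> ?L \<and> (\<forall>x\<in>X. \<forall>y\<in>Y. Tc x y)"
        using m(1) unfolding S by (rule memG[THEN iffD1])
      then have "\<exists>(X',Y')\<in>PR. (X \<subseteq> X' \<and> Y \<subseteq> Y') \<or> (X \<subseteq> Y' \<and> Y \<subseteq> X')"
        by (elim conjE) (rule dom)
      then obtain X' Y' where XY': "(X',Y') \<in> PR" "(X \<subseteq> X' \<and> Y \<subseteq> Y') \<or> (X \<subseteq> Y' \<and> Y \<subseteq> X')"
        by auto
      have inG: "{#X',Y'#} \<in> ?G" using pr_ok[OF XY'(1)] by (rule memG[THEN iffD2])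
      have "rel_mset (\<subseteq>) S {#X',Y'#}"
        using XY'(2)
      proof
        assume "X \<subseteq> X' \<and> Y \<subseteq> Y'" then show ?thesis unfolding S by (intro rel2I) auto
      next
        assume "X \<subseteq> Y' \<and> Y \<subseteq> X'"
        then have "rel_mset (\<subseteq>) S {#Y',X'#}" unfolding S by (intro rel2I) auto
        then show ?thesis by (simp add: add_mset_commute)
      qed
      then have "{#X',Y'#} = S" using m(2) inG by blast
      then show "S \<in> (\<lambda>(X,Y). {#X,Y#}) ` PR" using XY'(1) by force
    qed
  next
    show "(\<lambda>(X,Y). {#X,Y#}) ` PR \<subseteq> edgeC (RE P)"
    proof
      fix S assume "S \<in> (\<lambda>(X,Y). {#X,Y#}) ` PR"
      then obtain X Y where XY: "(X,Y) \<in> PR" "S = {#X,Y#}" by auto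
      have inG: "S \<in> ?G" unfolding XY(2) using pr_ok[OF XY(1)] by (rule memG[THEN iffD2])
      have "S' = S" if S': "S' \<in> ?G" "rel_mset (\<subseteq>) S S'" for S'
      proof -
        obtain a b where ab: "S' = {#a,b#}" "X \<subseteq> a" "Y \<subseteq> b" using S'(2) unfolding XY(2) rel2L by blast
        have g: "a \<noteq> {} \<and> b \<noteq> {} \<and> a \<subseteq> ?L \<and> b \<subseteq> ?L \<and> (\<forall>x\<in>a. \<forall>y\<in>b. Tc x y)"
          using S'(1) unfolding ab(1) by (rule memG[THEN iffD1])
        have "a \<subseteq> X"
        proof
          fix x assume "x \<in> a"
          then have "x \<in> ?L" using g by blast
          moreover have "\<forall>y\<in>Y. Tc x y" using g ab \<open>x \<in> a\<close> by blast
          ultimately show "x \<in> X" by (rule cl1[OF XY(1)])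
        qed
        moreover have "b \<subseteq> Y"
        proof
          fix y assume "y \<in> b"
          then have "y \<in> ?L" using g by blast
          moreover have "\<forall>x\<in>X. Tc x y" using g ab \<open>y \<in> b\<close> by blast
          ultimately show "y \<in> Y" by (rule cl2[OF XY(1)])
        qed
        ultimately show ?thesis using ab XY(2) by auto
      qed
      then have "maximal_in ?G S" unfolding maximal_in_def using inG by blast
      then show "S \<in> edgeC (RE P)" unfolding RE_parts(1) by simp
    qed
  qed
qed

lemma REbar_compute:
  fixes P :: "'a problem" and N3 :: "'a \<Rightarrow> 'a \<Rightarrow> 'a \<Rightarrow> bool" and TR :: "('a set \<times> 'a set \<times> 'a set) set"
  assumes nodes: "\<And>x y z. x \<in> labels P \<Longrightarrow> y \<in> labels P \<Longrightarrow> z \<in> labels P \<Longrightarrow> {#x,y,z#} \<in> nodeC P \<longleftrightarrow> N3 x y z"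
    and tr_ok: "\<And>X Y Z. (X,Y,Z) \<in> TR \<Longrightarrow> X \<noteq> {} \<and> Y \<noteq> {} \<and> Z \<noteq> {} \<and> X \<subseteq> labels P \<and> Y \<subseteq> labels P \<and> Z \<subseteq> labels P
        \<and> (\<forall>x\<in>X. \<forall>y\<in>Y. \<forall>z\<in>Z. N3 x y z)"
    and cl1: "\<And>X Y Z x. (X,Y,Z) \<in> TR \<Longrightarrow> x \<in> labels P \<Longrightarrow> (\<forall>y\<in>Y. \<forall>z\<in>Z. N3 x y z) \<Longrightarrow> x \<in> X"
    and cl2: "\<And>X Y Z y. (X,Y,Z) \<in> TR \<Longrightarrow> y \<in> labels P \<Longrightarrow> (\<forall>x\<in>X. \<forall>z\<in>Z. N3 x y z) \<Longrightarrow> y \<in> Y"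
    and cl3: "\<And>X Y Z z. (X,Y,Z) \<in> TR \<Longrightarrow> z \<in> labels P \<Longrightarrow> (\<forall>x\<in>X. \<forall>y\<in>Y. N3 x y z) \<Longrightarrow> z \<in> Z"
    and dom: "\<And>X Y Z. X \<noteq> {} \<Longrightarrow> Y \<noteq> {} \<Longrightarrow> Z \<noteq> {} \<Longrightarrow> X \<subseteq> labels P \<Longrightarrow> Y \<subseteq> labels P \<Longrightarrow> Z \<subseteq> labels P
       \<Longrightarrow> (\<forall>x\<in>X. \<forall>y\<in>Y. \<forall>z\<in>Z. N3 x y z)
       \<Longrightarrow> \<exists>(X',Y',Z')\<in>TR. rel_mset (\<subseteq>) {#X,Y,Z#} {#X',Y',Z'#}"
  shows "nodeC (REbar P) = (\<lambda>(X,Y,Z). {#X,Y,Z#}) ` TR"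
proof -
  let ?L = "labels P"
  let ?G = "{T \<in> set_configs 3 ?L. all_choices_in T (nodeC P)}"
  have memG: "{#X,Y,Z#} \<in> ?G \<longleftrightarrow> X \<noteq> {} \<and> Y \<noteq> {} \<and> Z \<noteq> {} \<and> X \<subseteq> ?L \<and> Y \<subseteq> ?L \<and> Z \<subseteq> ?L
        \<and> (\<forall>x\<in>X. \<forall>y\<in>Y. \<forall>z\<in>Z. N3 x y z)" for X Y Z
  proof
    assume a: "{#X,Y,Z#} \<in> ?G"
    then have b: "X \<noteq> {}" "Y \<noteq> {}" "Z \<noteq> {}" "X \<subseteq> ?L" "Y \<subseteq> ?L" "Z \<subseteq> ?L" by (auto simp: set_configs_def)
    have ac: "all_choices_in {#X,Y,Z#} (nodeC P)" using a by simp
    have "\<forall>x\<in>X. \<forall>y\<in>Y. \<forall>z\<in>Z. N3 x y z"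
    proof (intro ballI)
      fix x y z assume xyz: "x \<in> X" "y \<in> Y" "z \<in> Z"
      then have "{#x,y,z#} \<in> nodeC P" using ac unfolding all3 by blast
      moreover have "x \<in> ?L" "y \<in> ?L" "z \<in> ?L" using xyz b by auto
      ultimately show "N3 x y z" using nodes by blast
    qed
    then show "X \<noteq> {} \<and> Y \<noteq> {} \<and> Z \<noteq> {} \<and> X \<subseteq> ?L \<and> Y \<subseteq> ?L \<and> Z \<subseteq> ?L \<and> (\<forall>x\<in>X. \<forall>y\<in>Y. \<forall>z\<in>Z. N3 x y z)"
      using b by blast
  next
    assume b: "X \<noteq> {} \<and> Y \<noteq> {} \<and> Z \<noteq> {} \<and> X \<subseteq> ?L \<and> Y \<subseteq> ?L \<and> Z \<subseteq> ?L \<and> (\<forall>x\<in>X. \<forall>y\<in>Y. \<forall>z\<in>Z. N3 x y z)"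
    have "all_choices_in {#X,Y,Z#} (nodeC P)" unfolding all3
    proof (intro ballI)
      fix x y z assume "x \<in> X" "y \<in> Y" "z \<in> Z"
      then show "{#x,y,z#} \<in> nodeC P" using b nodes[of x y z] by blast
    qed
    moreover have "{#X,Y,Z#} \<in> set_configs 3 ?L" using b by (auto simp: set_configs_def)
    ultimately show "{#X,Y,Z#} \<in> ?G" by blast
  qed
  have Gform: "\<exists>X Y Z. T = {#X,Y,Z#}" if "T \<in> ?G" for T
    using that size3_eq by (auto simp: set_configs_def)
  show ?thesis
  proof
    show "nodeC (REbar P) \<subseteq> (\<lambda>(X,Y,Z). {#X,Y,Z#}) ` TR"
    proof
      fix S assume "S \<in> nodeC (REbar P)"
      then have m: "S \<in> ?G" "\<forall>S'\<in>?G. rel_mset (\<subseteq>) S S' \<longrightarrow> S' = S"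
        unfolding REbar_parts(1) maximal_in_def by auto
      obtain X Y Z where S: "S = {#X,Y,Z#}" using Gform[OF m(1)] by blast
      have "X \<noteq> {} \<and> Y \<noteq> {} \<and> Z \<noteq> {} \<and> X \<subseteq> ?L \<and> Y \<subseteq> ?L \<and> Z \<subseteq> ?L \<and> (\<forall>x\<in>X. \<forall>y\<in>Y. \<forall>z\<in>Z. N3 x y z)"
        using m(1) unfolding S by (rule memG[THEN iffD1])
      then have "\<exists>(X',Y',Z')\<in>TR. rel_mset (\<subseteq>) {#X,Y,Z#} {#X',Y',Z'#}"
        by (elim conjE) (rule dom)
      then obtain X' Y' Z' where XY': "(X',Y',Z') \<in> TR" "rel_mset (\<subseteq>) {#X,Y,Z#} {#X',Y',Z'#}"
        by auto
      have inG: "{#X',Y',Z'#} \<in> ?G" using tr_ok[OF XY'(1)] by (rule memG[THEN iffD2])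
      then have "{#X',Y',Z'#} = S" using m(2) XY'(2) unfolding S by blast
      then show "S \<in> (\<lambda>(X,Y,Z). {#X,Y,Z#}) ` TR" using XY'(1) by force
    qed
  next
    show "(\<lambda>(X,Y,Z). {#X,Y,Z#}) ` TR \<subseteq> nodeC (REbar P)"
    proof
      fix S assume "S \<in> (\<lambda>(X,Y,Z). {#X,Y,Z#}) ` TR"
      then obtain X Y Z where XY: "(X,Y,Z) \<in> TR" "S = {#X,Y,Z#}" by auto
      have inG: "S \<in> ?G" unfolding XY(2) using tr_ok[OF XY(1)] by (rule memG[THEN iffD2])
      have "S' = S" if S': "S' \<in> ?G" "rel_mset (\<subseteq>) S S'" for S'
      proof -
        obtain a b c where ab: "S' = {#a,b,c#}" "X \<subseteq> a" "Y \<subseteq> b" "Z \<subseteq> c"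
          using S'(2) unfolding XY(2) rel3L by blast
        have g: "a \<noteq> {} \<and> b \<noteq> {} \<and> c \<noteq> {} \<and> a \<subseteq> ?L \<and> b \<subseteq> ?L \<and> c \<subseteq> ?L \<and> (\<forall>x\<in>a. \<forall>y\<in>b. \<forall>z\<in>c. N3 x y z)"
          using S'(1) unfolding ab(1) by (rule memG[THEN iffD1])
        have "a \<subseteq> X"
        proof
          fix x assume "x \<in> a"
          then have "x \<in> ?L" using g by blast
          moreover have "\<forall>y\<in>Y. \<forall>z\<in>Z. N3 x y z" using g ab \<open>x \<in> a\<close> by blast
          ultimately show "x \<in> X" by (rule cl1[OF XY(1)])
        qed
        moreover have "b \<subseteq> Y"
        proof
          fix y assume "y \<in> b"
          then have "y \<in> ?L" using g by blast
          moreover have "\<forall>x\<in>X. \<forall>z\<in>Z. N3 x y z" using g ab \<open>y \<in> b\<close> by blast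
          ultimately show "y \<in> Y" by (rule cl2[OF XY(1)])
        qed
        moreover have "c \<subseteq> Z"
        proof
          fix z assume "z \<in> c"
          then have "z \<in> ?L" using g by blast
          moreover have "\<forall>x\<in>X. \<forall>y\<in>Y. N3 x y z" using g ab \<open>z \<in> c\<close> by blast
          ultimately show "z \<in> Z" by (rule cl3[OF XY(1)])
        qed
        ultimately show ?thesis using ab XY(2) by auto
      qed
      then have "maximal_in ?G S" unfolding maximal_in_def using inG by blast
      then show "S \<in> nodeC (REbar P)" unfolding REbar_parts(1) by simp
    qed
  qed
qed


datatype rl = XB | XC | Y nat | Z nat

definition labs :: "nat \<Rightarrow> rl set" where
  "labs k = {XB, XC} \<union> Y ` {1..k} \<union> Z ` {1..k}"

fun F :: "rl \<Rightarrow> rl \<Rightarrow> bool" where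
  "F XB XC = True"
| "F XC XB = True"
| "F XB (Y m) = True"
| "F (Y m) XB = True"
| "F XC (Y m) = True"
| "F (Y m) XC = True"
| "F (Y m) (Y n) = True"
| "F (Y m) (Z j) = (j < m)"
| "F (Z j) (Y m) = (j < m)"
| "F _ _ = False"

lemma F_sym: "F a b = F b a"
  by (cases a; cases b) auto

definition Rp :: "nat \<Rightarrow> rl problem" where
  "Rp k = (labs k,
     {{#a,b,c#} | a b c. a \<in> labs k \<and> b \<in> labs k \<and> c \<in> labs k \<and> (F a b \<or> F a c \<or> F b c)},
     {{#XB,XC#}} \<union> {{#Y j, Z j#} | j. 1 \<le> j \<and> j \<le> k})"

fun rr :: "nat \<Rightarrow> rl \<Rightarrow> tlab set" where
  "rr k XB = insert TB (TD ` {1..k})"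
| "rr k XC = insert TC (TD ` {1..k})"
| "rr k (Y j) = {TB, TC} \<union> TD ` {1..k} \<union> TA ` {1..<j}"
| "rr k (Z j) = TD ` {j..k}"

fun gg :: "nat \<Rightarrow> tlab \<Rightarrow> rl set" where
  "gg k TB = insert XB (Y ` {1..k})"
| "gg k TC = insert XC (Y ` {1..k})"
| "gg k (TA i) = Y ` {i..k}"
| "gg k (TD i) = {XB, XC} \<union> Y ` {1..k} \<union> Z ` {1..<i}"

definition Tc :: "nat \<Rightarrow> tlab \<Rightarrow> tlab \<Rightarrow> bool" where
  "Tc k a b \<longleftrightarrow> (a \<in> insert TB (TD ` {1..k}) \<and> b \<in> insert TC (TD ` {1..k}))
     \<or> (b \<in> insert TB (TD ` {1..k}) \<and> a \<in> insert TC (TD ` {1..k}))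
     \<or> (\<exists>i j. 1 \<le> i \<and> i < j \<and> j \<le> k \<and> ((a = TA i \<and> b = TD j) \<or> (b = TA i \<and> a = TD j)))"

lemma labels_target: "labels (target k) = {TB, TC} \<union> TA ` {1..k-1} \<union> TD ` {1..k}"
  by (simp add: target_def labels_def)

lemma edgeC_target: "{#a,b#} \<in> edgeC (target k) \<longleftrightarrow> Tc k a b"
proof (cases "k = 0")
  case True
  then show ?thesis by (auto simp: target_def edgeC_def Tc_def mset2_eq)
next
  case False
  have "{#a,b#} \<in> edgeC (target k) \<longleftrightarrow>
     (\<exists>x y. {#a,b#} = {#x,y#} \<and> x \<in> insert TB (TD ` {1..k}) \<and> y \<in> insert TC (TD ` {1..k}))
     \<or> (\<exists>i j. {#a,b#} = {#TA i, TD j#} \<and> 1 \<le> i \<and> i < j \<and> j \<le> k)"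
    using False by (simp add: target_def edgeC_def)
  also have "\<dots> \<longleftrightarrow> Tc k a b" unfolding mset2_eq Tc_def by blast
  finally show ?thesis .
qed

lemma edgeC_target_form: "M \<in> edgeC (target k) \<Longrightarrow> \<exists>a b. M = {#a,b#}"
  by (cases "k = 0") (auto simp: target_def edgeC_def)

lemma nodeC_target_pos: "0 < k \<Longrightarrow> nodeC (target k) = {{#TB, TC, TD k#}} \<union> {{#TA i, TD i, TD k#} | i. 1 \<le> i \<and> i \<le> k - 1}"
  by (simp add: target_def nodeC_def)

lemma nodeC_target_0: "nodeC (target 0) = {{#TB, TC, TB#}, {#TB, TC, TC#}}"
  by (simp add: target_def nodeC_def)

lemma WF_target: "WF (target k)"
  unfolding WF_def
proof (intro conjI ballI)
  fix M assume "M \<in> nodeC (target k)"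
  then show "set_mset M \<subseteq> labels (target k)"
    by (cases "k = 0") (auto simp: nodeC_target_0 nodeC_target_pos labels_target)
next
  fix M assume M: "M \<in> edgeC (target k)"
  then obtain a b where ab: "M = {#a,b#}" using edgeC_target_form by blast
  then have "Tc k a b" using M edgeC_target by simp
  then show "set_mset M \<subseteq> labels (target k)" unfolding ab Tc_def labels_target by auto
qed

lemma finite_labels_target: "finite (labels (target k))"
  by (simp add: labels_target)


lemma Tc_sym: "Tc k a b = Tc k b a"
  unfolding Tc_def by blast

lemma Tc_TA_D: "Tc k (TA i) y \<Longrightarrow> \<exists>j. y = TD j \<and> 1 \<le> i \<and> i < j \<and> j \<le> k"
  unfolding Tc_def by auto

lemma Tc_TB: "Tc k TB y \<Longrightarrow> y \<in> insert TC (TD ` {1..k})"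
  unfolding Tc_def by auto

lemma Tc_TC: "Tc k TC y \<Longrightarrow> y \<in> insert TB (TD ` {1..k})"
  unfolding Tc_def by auto

lemma dom_target:
  assumes ne: "X \<noteq> {}" "Y' \<noteq> {}" and sub: "X \<subseteq> labels (target k)" "Y' \<subseteq> labels (target k)"
    and bic: "\<forall>x\<in>X. \<forall>y\<in>Y'. Tc k x y"
  shows "(\<exists>j\<in>{1..k}. X \<subseteq> rr k (Y j) \<and> Y' \<subseteq> rr k (Z j))
    \<or> (\<exists>j\<in>{1..k}. Y' \<subseteq> rr k (Y j) \<and> X \<subseteq> rr k (Z j))
    \<or> (X \<subseteq> rr k XB \<and> Y' \<subseteq> rr k XC) \<or> (Y' \<subseteq> rr k XB \<and> X \<subseteq> rr k XC)"
proof -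
  let ?D = "TD ` {1..k}"
  have side: "\<exists>j\<in>{1..k}. U \<subseteq> rr k (Y j) \<and> V \<subseteq> rr k (Z j)"
    if hyp: "U \<noteq> {}" "V \<noteq> {}" "U \<subseteq> labels (target k)" "V \<subseteq> ?D" "\<forall>x\<in>U. \<forall>y\<in>V. Tc k x y" for U V
  proof -
    obtain y0 where "y0 \<in> V" using hyp(2) by blast
    then obtain j0 where "TD j0 \<in> V" using hyp(4) by blast
    then have "\<exists>j. TD j \<in> V" by blast
    then obtain j where j: "TD j \<in> V" "\<forall>i<j. TD i \<notin> V" using exists_least_iff[of "\<lambda>j. TD j \<in> V"] by blast
    have jk: "j \<in> {1..k}" using j(1) hyp(4) by auto
    have V: "V \<subseteq> rr k (Z j)"
    proof
      fix v assume "v \<in> V"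
      then obtain i where i: "v = TD i" "i \<in> {1..k}" using hyp(4) by blast
      then have "\<not> i < j" using j(2) \<open>v \<in> V\<close> by blast
      then show "v \<in> rr k (Z j)" using i by auto
    qed
    have U: "U \<subseteq> rr k (Y j)"
    proof
      fix u assume u: "u \<in> U"
      then have T: "Tc k u (TD j)" using hyp(5) j(1) by blast
      have "u \<in> labels (target k)" using u hyp(3) by blast
      then consider "u = TB" | "u = TC" | i where "u = TA i" | i where "u = TD i" "i \<in> {1..k}"
        unfolding labels_target by blast
      then show "u \<in> rr k (Y j)"
      proof cases
        case (3 i)
        then have "i < j" "1 \<le> i" using Tc_TA_D[of k i "TD j"] T by auto
        then show ?thesis using 3 by auto
      qed auto
    qed
    show ?thesis using U V jk by blast
  qed
  show ?thesis
  proof (cases "Y' \<subseteq> ?D")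
    case True
    then show ?thesis using side[of X Y'] ne sub bic by blast
  next
    case nY: False
    show ?thesis
    proof (cases "X \<subseteq> ?D")
      case True
      have "\<forall>x\<in>Y'. \<forall>y\<in>X. Tc k x y" using bic Tc_sym by blast
      then show ?thesis using side[of Y' X] ne sub True by blast
    next
      case nX: False
      obtain x where x: "x \<in> X" "x \<notin> ?D" using nX by blast
      obtain y where y: "y \<in> Y'" "y \<notin> ?D" using nY by blast
      have Txy: "Tc k x y" using bic x y by blast
      have xl: "x \<in> labels (target k)" "y \<in> labels (target k)" using x y sub by auto
      have "x \<noteq> TA i" for i using Tc_TA_D[of k i y] Txy y by auto
      moreover have "y \<noteq> TA i" for i
      proof
        assume "y = TA i"
        then have "Tc k (TA i) x" using Txy Tc_sym by metis
        then show False using Tc_TA_D[of k i x] x by auto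
      qed
      ultimately have xy: "x \<in> {TB, TC}" "y \<in> {TB, TC}" using xl x y unfolding labels_target by auto
      show ?thesis
      proof (cases "x = TB")
        case True
        then have "y = TC" using xy Txy by (auto simp: Tc_def)
        have "X \<subseteq> rr k XB"
        proof
          fix u assume "u \<in> X" then have "Tc k u TC" using bic y \<open>y = TC\<close> by blast
          then show "u \<in> rr k XB" using Tc_TC Tc_sym by fastforce
        qed
        moreover have "Y' \<subseteq> rr k XC"
        proof
          fix u assume "u \<in> Y'" then have "Tc k TB u" using bic x True by blast
          then show "u \<in> rr k XC" using Tc_TB by fastforce
        qed
        ultimately show ?thesis by blast
      next
        case False
        then have "x = TC" "y = TB" using xy Txy by (auto simp: Tc_def)
        have "Y' \<subseteq> rr k XB"
        proof
          fix u assume "u \<in> Y'" then have "Tc k TC u" using bic x \<open>x = TC\<close> by blast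
          then show "u \<in> rr k XB" using Tc_TC by fastforce
        qed
        moreover have "X \<subseteq> rr k XC"
        proof
          fix u assume "u \<in> X" then have "Tc k u TB" using bic y \<open>y = TB\<close> by blast
          then show "u \<in> rr k XC" using Tc_TB Tc_sym by fastforce
        qed
        ultimately show ?thesis by blast
      qed
    qed
  qed
qed


lemma Tc_D: "y \<in> TD ` {1..k} \<Longrightarrow> x \<in> {TB, TC} \<union> TD ` {1..k} \<Longrightarrow> Tc k x y"
  unfolding Tc_def by auto

lemma TB_rr: "TB \<in> rr k u \<Longrightarrow> u = XB \<or> (\<exists>m. u = Y m)"
  by (cases u) auto
lemma TC_rr: "TC \<in> rr k u \<Longrightarrow> u = XC \<or> (\<exists>m. u = Y m)"
  by (cases u) auto
lemma TA_rr: "TA i \<in> rr k u \<Longrightarrow> \<exists>m. u = Y m \<and> 1 \<le> i \<and> i < m"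
  by (cases u) auto
lemma TD_rr: "TD i \<in> rr k v \<Longrightarrow> v = XB \<or> v = XC \<or> (\<exists>m. v = Y m) \<or> (\<exists>j. v = Z j \<and> j \<le> i)"
  by (cases v) auto

lemma F_BC: "TB \<in> rr k u \<Longrightarrow> TC \<in> rr k v \<Longrightarrow> F u v"
  using TB_rr[of k u] TC_rr[of k v] by auto

lemma F_AD: "TA i \<in> rr k u \<Longrightarrow> TD i \<in> rr k v \<Longrightarrow> F u v"
proof -
  assume a: "TA i \<in> rr k u" "TD i \<in> rr k v"
  from TA_rr[OF a(1)] obtain m where m: "u = Y m" "1 \<le> i" "i < m" by blast
  from TD_rr[OF a(2)] show "F u v" using m by auto
qed

lemma TDk_rr: "0 < k \<Longrightarrow> c \<in> labs k \<Longrightarrow> TD k \<in> rr k c"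
  unfolding labs_def by auto

lemma choice_pair:
  assumes k: "0 < k" and ab: "a \<in> labs k" "b \<in> labs k" "c \<in> labs k" and F: "F a b"
  shows "some_choice_in {#rr k a, rr k b, rr k c#} (nodeC (target k))"
proof -
  have Dk: "TD k \<in> rr k c" using TDk_rr[OF k ab(3)] .
  have BC: "{#TB, TC, TD k#} \<in> nodeC (target k)" "{#TC, TB, TD k#} \<in> nodeC (target k)"
    using k by (auto simp: nodeC_target_pos add_mset_commute)
  have AD: "{#TA j, TD j, TD k#} \<in> nodeC (target k)" "{#TD j, TA j, TD k#} \<in> nodeC (target k)"
    if "1 \<le> j" "j < k" for j
    using k that by (auto simp: nodeC_target_pos add_mset_commute)
  show ?thesis unfolding some3
  proof (cases a)
    case XB
    then show "\<exists>l1\<in>rr k a. \<exists>l2\<in>rr k b. \<exists>l3\<in>rr k c. {#l1, l2, l3#} \<in> nodeC (target k)"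
      using F Dk BC by (cases b) auto
  next
    case XC
    then show "\<exists>l1\<in>rr k a. \<exists>l2\<in>rr k b. \<exists>l3\<in>rr k c. {#l1, l2, l3#} \<in> nodeC (target k)"
      using F Dk BC by (cases b) auto
  next
    case (Y m)
    then have mk: "m \<le> k" using ab(1) unfolding labs_def by auto
    show "\<exists>l1\<in>rr k a. \<exists>l2\<in>rr k b. \<exists>l3\<in>rr k c. {#l1, l2, l3#} \<in> nodeC (target k)"
    proof (cases b)
      case (Z j)
      then have "1 \<le> j" "j < m" using F ab(2) Y unfolding labs_def by auto
      then have "TA j \<in> rr k a" "TD j \<in> rr k b" "{#TA j, TD j, TD k#} \<in> nodeC (target k)"
        using Y Z AD(1)[of j] mk by auto
      then show ?thesis using Dk by blast
    qed (use Y Dk BC in auto)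
  next
    case (Z j)
    then have jk: "1 \<le> j" "j \<le> k" using ab(1) unfolding labs_def by auto
    show "\<exists>l1\<in>rr k a. \<exists>l2\<in>rr k b. \<exists>l3\<in>rr k c. {#l1, l2, l3#} \<in> nodeC (target k)"
    proof (cases b)
      case (Y m)
      then have mk: "m \<le> k" using ab(2) unfolding labs_def by auto
      have "j < m" using F Y Z by auto
      then have "TD j \<in> rr k a" "TA j \<in> rr k b" "{#TD j, TA j, TD k#} \<in> nodeC (target k)"
        using Y Z AD(2)[of j] mk jk by auto
      then show ?thesis using Dk by blast
    qed (use F Z in auto)
  qed
qed

lemma choice_target:
  assumes ab: "a \<in> labs k" "b \<in> labs k" "c \<in> labs k"
  shows "some_choice_in {#rr k a, rr k b, rr k c#} (nodeC (target k)) \<longleftrightarrow> (F a b \<or> F a c \<or> F b c)"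
proof (cases "k = 0")
  case True
  then have "a \<in> {XB, XC}" "b \<in> {XB, XC}" "c \<in> {XB, XC}" using ab unfolding labs_def by auto
  then show ?thesis using True
    by (cases a; cases b; cases c) (simp_all add: some3 nodeC_target_0 mset3_eq mset2_eq)
next
  case False
  then have k: "0 < k" by simp
  show ?thesis
  proof
    assume "some_choice_in {#rr k a, rr k b, rr k c#} (nodeC (target k))"
    then obtain l1 l2 l3 where l: "l1 \<in> rr k a" "l2 \<in> rr k b" "l3 \<in> rr k c"
      "{#l1, l2, l3#} \<in> nodeC (target k)" unfolding some3 by blast
    then consider "{#l1, l2, l3#} = {#TB, TC, TD k#}"
      | i where "{#l1, l2, l3#} = {#TA i, TD i, TD k#}"
      using k by (auto simp: nodeC_target_pos)
    then show "F a b \<or> F a c \<or> F b c"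
    proof cases
      case 1
      then show ?thesis unfolding mset3_eq using l(1-3) F_BC[of k] F_sym by metis
    next
      case (2 i)
      then show ?thesis unfolding mset3_eq using l(1-3) F_AD[of i k] F_sym by metis
    qed
  next
    assume "F a b \<or> F a c \<or> F b c"
    then consider "F a b" | "F a c" | "F b c" by blast
    then show "some_choice_in {#rr k a, rr k b, rr k c#} (nodeC (target k))"
    proof cases
      case 1 then show ?thesis using choice_pair[OF k ab] by blast
    next
      case 2
      have e: "{#rr k a, rr k b, rr k c#} = {#rr k a, rr k c, rr k b#}" by (simp add: add_mset_commute)
      show ?thesis unfolding e by (rule choice_pair[OF k ab(1) ab(3) ab(2) 2])
    next
      case 3
      have e: "{#rr k a, rr k b, rr k c#} = {#rr k b, rr k c, rr k a#}" by (simp add: add_mset_commute)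
      show ?thesis unfolding e by (rule choice_pair[OF k ab(2) ab(3) ab(1) 3])
    qed
  qed
qed


definition PRk :: "nat \<Rightarrow> (tlab set \<times> tlab set) set" where
  "PRk k = insert (rr k XB, rr k XC) ((\<lambda>j. (rr k (Y j), rr k (Z j))) ` {1..k})"

lemma edgeC_RE_target: "edgeC (RE (target k)) = (\<lambda>(X,Y). {#X,Y#}) ` PRk k"
proof (rule RE_compute[where Tc = "Tc k"])
  show "{#x, y#} \<in> edgeC (target k) \<longleftrightarrow> Tc k x y" for x y by (rule edgeC_target)
next
  fix X Y' assume "(X, Y') \<in> PRk k"
  then consider "X = rr k XB" "Y' = rr k XC" | j where "j \<in> {1..k}" "X = rr k (Y j)" "Y' = rr k (Z j)"
    unfolding PRk_def by blast
  then show "X \<noteq> {} \<and> Y' \<noteq> {} \<and> X \<subseteq> labels (target k) \<and> Y' \<subseteq> labels (target k) \<and> (\<forall>x\<in>X. \<forall>y\<in>Y'. Tc k x y)"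
  proof cases
    case 1
    then show ?thesis by (auto simp: labels_target Tc_def)
  next
    case (2 j)
    have "\<forall>x\<in>X. \<forall>y\<in>Y'. Tc k x y"
    proof (intro ballI)
      fix x y assume xy: "x \<in> X" "y \<in> Y'"
      then obtain j' where j': "y = TD j'" "j \<le> j'" "j' \<le> k" using 2 by auto
      show "Tc k x y"
      proof (cases "x \<in> {TB, TC} \<union> TD ` {1..k}")
        case True then show ?thesis using j' 2(1) by (intro Tc_D) auto
      next
        case False
        then obtain i where "x = TA i" "1 \<le> i" "i < j" using xy 2 by auto
        then show ?thesis using j' unfolding Tc_def by auto
      qed
    qed
    moreover have "X \<subseteq> labels (target k)" "Y' \<subseteq> labels (target k)"
      using 2 by (auto simp: labels_target)
    moreover have "X \<noteq> {}" "Y' \<noteq> {}" using 2 by auto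
    ultimately show ?thesis by blast
  qed
next
  fix X Y' x assume pr: "(X, Y') \<in> PRk k" and x: "x \<in> labels (target k)" and all: "\<forall>y\<in>Y'. Tc k x y"
  from pr consider "X = rr k XB" "Y' = rr k XC" | j where "j \<in> {1..k}" "X = rr k (Y j)" "Y' = rr k (Z j)"
    unfolding PRk_def by blast
  then show "x \<in> X"
  proof cases
    case 1
    then have "Tc k x TC" using all by simp
    then show ?thesis using 1 Tc_TC Tc_sym by fastforce
  next
    case (2 j)
    then have T: "Tc k x (TD j)" using all by auto
    from x consider "x = TB" | "x = TC" | i where "x = TA i" | i where "x = TD i" "i \<in> {1..k}"
      unfolding labels_target by blast
    then show ?thesis
    proof cases
      case (3 i)
      then show ?thesis using Tc_TA_D[of k i "TD j"] T 2 by auto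
    qed (use 2 in auto)
  qed
next
  fix X Y' y assume pr: "(X, Y') \<in> PRk k" and y: "y \<in> labels (target k)" and all: "\<forall>x\<in>X. Tc k x y"
  from pr consider "X = rr k XB" "Y' = rr k XC" | j where "j \<in> {1..k}" "X = rr k (Y j)" "Y' = rr k (Z j)"
    unfolding PRk_def by blast
  then show "y \<in> Y'"
  proof cases
    case 1
    then have "Tc k TB y" using all by simp
    then show ?thesis using 1 Tc_TB by fastforce
  next
    case (2 j)
    then have "Tc k TB y" using all by auto
    then have "y \<in> insert TC (TD ` {1..k})" by (rule Tc_TB)
    moreover have "Tc k TC y" using all 2 by auto
    then have "y \<in> insert TB (TD ` {1..k})" by (rule Tc_TC)
    ultimately obtain i where i: "y = TD i" "i \<in> {1..k}" by auto
    have "\<not> i < j"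
    proof
      assume "i < j"
      then have "TA (j - 1) \<in> X" using 2 i by auto
      then have "Tc k (TA (j - 1)) (TD i)" using all i by simp
      then show False using Tc_TA_D[of k "j - 1" "TD i"] \<open>i < j\<close> by auto
    qed
    then show ?thesis using 2 i by auto
  qed
next
  fix X Y' assume "X \<noteq> {}" "Y' \<noteq> {}" "X \<subseteq> labels (target k)" "Y' \<subseteq> labels (target k)"
    "\<forall>x\<in>X. \<forall>y\<in>Y'. Tc k x y"
  from dom_target[OF this] show "\<exists>(X', Y'a)\<in>PRk k. X \<subseteq> X' \<and> Y' \<subseteq> Y'a \<or> X \<subseteq> Y'a \<and> Y' \<subseteq> X'"
    unfolding PRk_def by blast
qed

lemma edgeC_Rp: "edgeC (Rp k) = {{#XB,XC#}} \<union> {{#Y j, Z j#} | j. 1 \<le> j \<and> j \<le> k}"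
  and labels_Rp: "labels (Rp k) = labs k"
  and nodeC_Rp: "nodeC (Rp k) = {{#a,b,c#} | a b c. a \<in> labs k \<and> b \<in> labs k \<and> c \<in> labs k \<and> (F a b \<or> F a c \<or> F b c)}"
  by (simp_all add: Rp_def edgeC_def labels_def nodeC_def)

lemma PRk_image: "(\<lambda>(X,Y). {#X,Y#}) ` PRk k = insert {#rr k XB, rr k XC#} ((\<lambda>j. {#rr k (Y j), rr k (Z j)#}) ` {1..k})"
  unfolding PRk_def image_insert image_image by simp

lemma edgeC_Rp': "edgeC (Rp k) = insert {#XB,XC#} ((\<lambda>j. {#Y j, Z j#}) ` {1..k})"
  unfolding edgeC_Rp by auto

lemma edgeC_RE_target': "edgeC (RE (target k)) = image_mset (rr k) ` edgeC (Rp k)"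
  unfolding edgeC_RE_target edgeC_Rp' PRk_image image_insert image_image by simp

lemma labels_RE_target: "labels (RE (target k)) = rr k ` labs k"
proof -
  have "labels (RE (target k)) = {rr k XB, rr k XC} \<union> (\<Union>j\<in>{1..k}. {rr k (Y j), rr k (Z j)})"
    unfolding RE_parts(2)[of "target k"] edgeC_RE_target PRk_image by simp
  also have "\<dots> = rr k ` labs k" unfolding labs_def image_Un image_image image_insert image_empty by blast
  finally show ?thesis .
qed

lemma nodeC_RE_target: "nodeC (RE (target k)) = image_mset (rr k) ` nodeC (Rp k)"
proof
  show "nodeC (RE (target k)) \<subseteq> image_mset (rr k) ` nodeC (Rp k)"
  proof
    fix M assume "M \<in> nodeC (RE (target k))"
    then have M: "size M = 3" "set_mset M \<subseteq> rr k ` labs k" "some_choice_in M (nodeC (target k))"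
      unfolding RE_parts(3)[of "target k"] labels_RE_target by auto
    obtain X1 X2 X3 where X: "M = {#X1, X2, X3#}" using size3_eq[OF M(1)] by blast
    then obtain a b c where abc: "a \<in> labs k" "b \<in> labs k" "c \<in> labs k" "X1 = rr k a" "X2 = rr k b" "X3 = rr k c"
      using M(2) by auto
    have "F a b \<or> F a c \<or> F b c" using M(3) choice_target[OF abc(1-3)] X abc by simp
    then have "{#a,b,c#} \<in> nodeC (Rp k)" unfolding nodeC_Rp using abc by blast
    moreover have "M = image_mset (rr k) {#a,b,c#}" using X abc by simp
    ultimately show "M \<in> image_mset (rr k) ` nodeC (Rp k)" by blast
  qed
next
  show "image_mset (rr k) ` nodeC (Rp k) \<subseteq> nodeC (RE (target k))"
  proof
    fix M assume "M \<in> image_mset (rr k) ` nodeC (Rp k)"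
    then obtain a b c where abc: "a \<in> labs k" "b \<in> labs k" "c \<in> labs k" "F a b \<or> F a c \<or> F b c"
      "M = {#rr k a, rr k b, rr k c#}"
      unfolding nodeC_Rp by auto
    have "some_choice_in M (nodeC (target k))" using choice_target[OF abc(1-3)] abc by simp
    moreover have "set_mset M \<subseteq> rr k ` labs k" "size M = 3" using abc by auto
    ultimately show "M \<in> nodeC (RE (target k))"
      unfolding RE_parts(3)[of "target k"] labels_RE_target by simp
  qed
qed

lemma RE_target: "RE (target k) = rename (rr k) (Rp k)"
  by (rule problem_eqI) (simp_all add: labels_RE_target labels_Rp nodeC_RE_target edgeC_RE_target')


lemma nfD: "\<not> F u v \<Longrightarrow> (u = XB \<and> v = XB) \<or> (u = XC \<and> v = XC)
   \<or> (\<exists>j. u = Z j \<and> (v = XB \<or> v = XC \<or> (\<exists>j'. v = Z j') \<or> (\<exists>m. v = Y m \<and> m \<le> j)))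
   \<or> (\<exists>j. v = Z j \<and> (u = XB \<or> u = XC \<or> (\<exists>m. u = Y m \<and> m \<le> j)))"
  by (cases u; cases v) auto

lemma six:
  assumes a: "\<not> F x1 y1" and b: "\<not> F x2 z2" and c: "\<not> F y3 z3"
  shows "\<exists>x\<in>{x1,x2}. \<exists>y\<in>{y1,y3}. \<exists>z\<in>{z2,z3}. \<not> F x y \<and> \<not> F x z \<and> \<not> F y z"
  using nfD[OF a] nfD[OF b] nfD[OF c] by (elim disjE exE conjE) auto

lemma N3_Rp:
  assumes "x \<in> labs k" "y \<in> labs k" "z \<in> labs k"
  shows "{#x,y,z#} \<in> nodeC (Rp k) \<longleftrightarrow> (F x y \<or> F x z \<or> F y z)"
proof
  assume "{#x,y,z#} \<in> nodeC (Rp k)"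
  then obtain a b c where abc: "{#x,y,z#} = {#a,b,c#}" "F a b \<or> F a c \<or> F b c"
    unfolding nodeC_Rp by blast
  from abc(1) show "F x y \<or> F x z \<or> F y z" unfolding mset3_eq using abc(2) F_sym by metis
next
  assume "F x y \<or> F x z \<or> F y z"
  then show "{#x,y,z#} \<in> nodeC (Rp k)" unfolding nodeC_Rp using assms by blast
qed

lemma bic_of_good:
  assumes "\<forall>x\<in>X. \<forall>y\<in>Y'. \<forall>z\<in>Z'. F x y \<or> F x z \<or> F y z"
  shows "(\<forall>x\<in>X. \<forall>y\<in>Y'. F x y) \<or> (\<forall>x\<in>X. \<forall>z\<in>Z'. F x z) \<or> (\<forall>y\<in>Y'. \<forall>z\<in>Z'. F y z)"
proof (rule ccontr)
  assume "\<not> ?thesis"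
  then obtain x1 y1 x2 z2 y3 z3 where e: "x1 \<in> X" "y1 \<in> Y'" "\<not> F x1 y1" "x2 \<in> X" "z2 \<in> Z'" "\<not> F x2 z2"
    "y3 \<in> Y'" "z3 \<in> Z'" "\<not> F y3 z3" by blast
  from six[OF e(3) e(6) e(9)] obtain x y z where "x \<in> {x1,x2}" "y \<in> {y1,y3}" "z \<in> {z2,z3}"
    "\<not> F x y" "\<not> F x z" "\<not> F y z" by blast
  moreover have "x \<in> X" "y \<in> Y'" "z \<in> Z'" using calculation(1-3) e by auto
  ultimately show False using assms by blast
qed

lemma bic_dom:
  assumes ne: "U \<noteq> {}" "V \<noteq> {}" and sub: "U \<subseteq> labs k" "V \<subseteq> labs k"
    and bic: "\<forall>u\<in>U. \<forall>v\<in>V. F u v"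
  shows "(U \<subseteq> gg k TB \<and> V \<subseteq> gg k TC) \<or> (U \<subseteq> gg k TC \<and> V \<subseteq> gg k TB)
    \<or> (\<exists>i\<in>{1..k}. U \<subseteq> gg k (TA i) \<and> V \<subseteq> gg k (TD i))
    \<or> (\<exists>i\<in>{1..k}. V \<subseteq> gg k (TA i) \<and> U \<subseteq> gg k (TD i))"
proof -
  have side: "\<exists>i\<in>{1..k}. B \<subseteq> gg k (TA i) \<and> A \<subseteq> gg k (TD i)"
    if hyp: "A \<subseteq> labs k" "B \<noteq> {}" "B \<subseteq> Y ` {1..k}" "\<forall>u\<in>A. \<forall>v\<in>B. F u v" for A B
  proof -
    obtain v0 where "v0 \<in> B" using hyp(2) by blast
    then obtain m0 where "Y m0 \<in> B" using hyp(3) by blast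
    then have "\<exists>m. Y m \<in> B" by blast
    then obtain m where m: "Y m \<in> B" "\<forall>i<m. Y i \<notin> B" using exists_least_iff[of "\<lambda>m. Y m \<in> B"] by blast
    have mk: "m \<in> {1..k}" using m(1) hyp(3) by auto
    have Bs: "B \<subseteq> gg k (TA m)"
    proof
      fix v assume "v \<in> B"
      then obtain i where i: "v = Y i" "i \<in> {1..k}" using hyp(3) by blast
      then have "\<not> i < m" using m(2) \<open>v \<in> B\<close> by blast
      then show "v \<in> gg k (TA m)" using i by auto
    qed
    have As: "A \<subseteq> gg k (TD m)"
    proof
      fix u assume u: "u \<in> A"
      then have Fu: "F u (Y m)" using hyp(4) m(1) by blast
      have "u \<in> labs k" using u hyp(1) by blast
      then consider "u = XB" | "u = XC" | i where "u = Y i" "i \<in> {1..k}" | j where "u = Z j" "j \<in> {1..k}"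
        unfolding labs_def by blast
      then show "u \<in> gg k (TD m)"
      proof cases
        case (4 j)
        then have "j < m" using Fu by simp
        then show ?thesis using 4 by auto
      qed auto
    qed
    show ?thesis using As Bs mk by blast
  qed
  let ?YY = "Y ` {1..k}"
  show ?thesis
  proof (cases "V \<subseteq> ?YY")
    case True
    then show ?thesis using side[of U V] ne sub bic by blast
  next
    case nV: False
    show ?thesis
    proof (cases "U \<subseteq> ?YY")
      case True
      have "\<forall>u\<in>V. \<forall>v\<in>U. F u v" using bic F_sym by blast
      then show ?thesis using side[of V U] ne sub True by blast
    next
      case nU: False
      obtain u where u: "u \<in> U" "u \<notin> ?YY" using nU by blast
      obtain v where v: "v \<in> V" "v \<notin> ?YY" using nV by blast
      have "u \<in> labs k" "v \<in> labs k" using u v sub by auto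
      then have nY: "\<forall>m. u \<noteq> Y m" "\<forall>m. v \<noteq> Y m" using u v unfolding labs_def by auto
      have Fuv: "F u v" using bic u v by blast
      have uv: "(u = XB \<and> v = XC) \<or> (u = XC \<and> v = XB)"
        using Fuv nY by (cases u; cases v) auto
      then show ?thesis
      proof
        assume uv: "u = XB \<and> v = XC"
        have "U \<subseteq> gg k TB"
        proof
          fix u' assume "u' \<in> U"
          then have "F u' XC" "u' \<in> labs k" using bic v uv sub by auto
          then show "u' \<in> gg k TB" unfolding labs_def by (cases u') auto
        qed
        moreover have "V \<subseteq> gg k TC"
        proof
          fix v' assume "v' \<in> V"
          then have "F XB v'" "v' \<in> labs k" using bic u uv sub by auto
          then show "v' \<in> gg k TC" unfolding labs_def by (cases v') auto
        qed
        ultimately show ?thesis by blast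
      next
        assume uv: "u = XC \<and> v = XB"
        have "U \<subseteq> gg k TC"
        proof
          fix u' assume "u' \<in> U"
          then have "F u' XB" "u' \<in> labs k" using bic v uv sub by auto
          then show "u' \<in> gg k TC" unfolding labs_def by (cases u') auto
        qed
        moreover have "V \<subseteq> gg k TB"
        proof
          fix v' assume "v' \<in> V"
          then have "F XC v'" "v' \<in> labs k" using bic u uv sub by auto
          then show "v' \<in> gg k TB" unfolding labs_def by (cases v') auto
        qed
        ultimately show ?thesis by blast
      qed
    qed
  qed
qed

lemma perm_rel:
  assumes "(X \<subseteq> A \<and> Y' \<subseteq> B \<and> Z' \<subseteq> C) \<or> (X \<subseteq> A \<and> Y' \<subseteq> C \<and> Z' \<subseteq> B) \<or> (X \<subseteq> B \<and> Y' \<subseteq> A \<and> Z' \<subseteq> C)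
    \<or> (X \<subseteq> B \<and> Y' \<subseteq> C \<and> Z' \<subseteq> A) \<or> (X \<subseteq> C \<and> Y' \<subseteq> A \<and> Z' \<subseteq> B) \<or> (X \<subseteq> C \<and> Y' \<subseteq> B \<and> Z' \<subseteq> A)"
  shows "rel_mset (\<subseteq>) {#X,Y',Z'#} {#A,B,C#}"
proof -
  have e: "{#A,B,C#} = {#A,C,B#}" "{#A,B,C#} = {#B,A,C#}" "{#A,B,C#} = {#B,C,A#}"
    "{#A,B,C#} = {#C,A,B#}" "{#A,B,C#} = {#C,B,A#}" by (simp_all add: add_mset_commute)
  from assms show ?thesis
  proof (elim disjE conjE)
    assume "X \<subseteq> A" "Y' \<subseteq> B" "Z' \<subseteq> C" then show ?thesis by (rule rel3I)
  next
    assume "X \<subseteq> A" "Y' \<subseteq> C" "Z' \<subseteq> B" then show ?thesis unfolding e(1) by (rule rel3I)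
  next
    assume "X \<subseteq> B" "Y' \<subseteq> A" "Z' \<subseteq> C" then show ?thesis unfolding e(2) by (rule rel3I)
  next
    assume "X \<subseteq> B" "Y' \<subseteq> C" "Z' \<subseteq> A" then show ?thesis unfolding e(3) by (rule rel3I)
  next
    assume "X \<subseteq> C" "Y' \<subseteq> A" "Z' \<subseteq> B" then show ?thesis unfolding e(4) by (rule rel3I)
  next
    assume "X \<subseteq> C" "Y' \<subseteq> B" "Z' \<subseteq> A" then show ?thesis unfolding e(5) by (rule rel3I)
  qed
qed


definition TRk :: "nat \<Rightarrow> (rl set \<times> rl set \<times> rl set) set" where
  "TRk k = insert (gg k TB, gg k TC, labs k) ((\<lambda>i. (gg k (TA i), gg k (TD i), labs k)) ` {1..k})"

lemma gg_top: "gg k (TD (Suc k)) = labs k"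
  unfolding labs_def by auto

lemma N3_cases: "F x y \<or> F x z \<or> F y z \<Longrightarrow> \<not> F x y \<Longrightarrow> \<not> F x z \<Longrightarrow> F y z"
  by blast

lemma tr_ok_Rp:
  assumes "(X, Y', Z') \<in> TRk k"
  shows "X \<noteq> {} \<and> Y' \<noteq> {} \<and> Z' \<noteq> {} \<and> X \<subseteq> labs k \<and> Y' \<subseteq> labs k \<and> Z' \<subseteq> labs k
        \<and> (\<forall>x\<in>X. \<forall>y\<in>Y'. \<forall>z\<in>Z'. F x y \<or> F x z \<or> F y z)"
proof -
  from assms consider "X = gg k TB" "Y' = gg k TC" "Z' = labs k"
    | i where "i \<in> {1..k}" "X = gg k (TA i)" "Y' = gg k (TD i)" "Z' = labs k"
    unfolding TRk_def by blast
  then show ?thesis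
  proof cases
    case 1
    have "\<forall>x\<in>X. \<forall>y\<in>Y'. F x y" unfolding 1 by auto
    moreover have "X \<subseteq> labs k" "Y' \<subseteq> labs k" unfolding 1 labs_def by auto
    ultimately show ?thesis using 1 by (auto simp: labs_def)
  next
    case (2 i)
    have "\<forall>x\<in>X. \<forall>y\<in>Y'. F x y" unfolding 2 by auto
    moreover have "X \<subseteq> labs k" "Y' \<subseteq> labs k" using 2(1) unfolding 2 labs_def by auto
    moreover have "X \<noteq> {}" using 2 by auto
    ultimately show ?thesis using 2 by (auto simp: labs_def)
  qed
qed

lemma cl1_Rp:
  assumes "(X, Y', Z') \<in> TRk k" "x \<in> labs k" "\<forall>y\<in>Y'. \<forall>z\<in>Z'. F x y \<or> F x z \<or> F y z"
  shows "x \<in> X"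
proof -
  from assms(1) consider "X = gg k TB" "Y' = gg k TC" "Z' = labs k"
    | i where "i \<in> {1..k}" "X = gg k (TA i)" "Y' = gg k (TD i)" "Z' = labs k"
    unfolding TRk_def by blast
  then show ?thesis
  proof cases
    case 1
    have "XC \<in> Y'" "XC \<in> Z'" unfolding 1 labs_def by auto
    then have "F x XC \<or> F x XC \<or> F XC XC" using assms(3) by blast
    then have "F x XC" by simp
    then show ?thesis using assms(2) unfolding 1 labs_def by (cases x) auto
  next
    case (2 i)
    have "XC \<in> Y'" "XC \<in> Z'" "XB \<in> Y'" "XB \<in> Z'" unfolding 2 labs_def by auto
    then have "F x XC \<or> F x XC \<or> F XC XC" "F x XB \<or> F x XB \<or> F XB XB" using assms(3) by blast+
    then have "F x XC" "F x XB" by simp_all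
    then obtain m where m: "x = Y m" by (cases x) auto
    then have mk: "1 \<le> m" "m \<le> k" using assms(2) unfolding labs_def by auto
    have "\<not> m < i"
    proof
      assume "m < i"
      then have i1: "i - 1 \<in> {1..k}" "i - 1 \<in> {1..<i}" using 2 mk by auto
      have "Z (i - 1) \<in> Z ` {1..<i}" "Z (i - 1) \<in> Z ` {1..k}" using i1 by blast+
      then have "Z (i - 1) \<in> Y'" "Z (i - 1) \<in> Z'" using 2 unfolding labs_def by auto
      then have "F x (Z (i - 1)) \<or> F x (Z (i - 1)) \<or> F (Z (i - 1)) (Z (i - 1))" using assms(3) by blast
      then have "F x (Z (i - 1))" by simp
      then show False using m \<open>m < i\<close> by simp
    qed
    then show ?thesis using 2 m mk by auto
  qed
qed

lemma cl2_Rp: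
  assumes "(X, Y', Z') \<in> TRk k" "y \<in> labs k" "\<forall>x\<in>X. \<forall>z\<in>Z'. F x y \<or> F x z \<or> F y z"
  shows "y \<in> Y'"
proof -
  from assms(1) consider "X = gg k TB" "Y' = gg k TC" "Z' = labs k"
    | i where "i \<in> {1..k}" "X = gg k (TA i)" "Y' = gg k (TD i)" "Z' = labs k"
    unfolding TRk_def by blast
  then show ?thesis
  proof cases
    case 1
    have "XB \<in> X" "XB \<in> Z'" unfolding 1 labs_def by auto
    then have "F XB y \<or> F XB XB \<or> F y XB" using assms(3) by blast
    then have "F XB y" using F_sym by auto
    then show ?thesis using assms(2) unfolding 1 labs_def by (cases y) auto
  next
    case (2 i)
    show ?thesis
    proof (cases "\<exists>j. y = Z j \<and> i \<le> j")
      case True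
      then obtain j where j: "y = Z j" "i \<le> j" by blast
      have "Y i \<in> X" "y \<in> Z'" using 2 assms(2) by auto
      then have "F (Y i) y \<or> F (Y i) y \<or> F y y" using assms(3) by blast
      then have "F (Y i) y" using j by auto
      then show ?thesis using j by simp
    next
      case False
      then show ?thesis using assms(2) 2 unfolding labs_def by auto
    qed
  qed
qed

lemma cl3_Rp:
  assumes "(X, Y', Z') \<in> TRk k" "z \<in> labs k"
  shows "z \<in> Z'"
  using assms unfolding TRk_def by auto

lemma dom_Rp:
  assumes ne: "X \<noteq> {}" "Y' \<noteq> {}" "Z' \<noteq> {}" and sub: "X \<subseteq> labs k" "Y' \<subseteq> labs k" "Z' \<subseteq> labs k"
    and good: "\<forall>x\<in>X. \<forall>y\<in>Y'. \<forall>z\<in>Z'. F x y \<or> F x z \<or> F y z"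
  shows "\<exists>(A,B,C)\<in>TRk k. rel_mset (\<subseteq>) {#X,Y',Z'#} {#A,B,C#}"
proof -
  have T0: "(gg k TB, gg k TC, labs k) \<in> TRk k" unfolding TRk_def by simp
  have Ti: "(gg k (TA i), gg k (TD i), labs k) \<in> TRk k" if "i \<in> {1..k}" for i
    unfolding TRk_def using that by blast
  have pair: "\<exists>(A,B,C)\<in>TRk k. rel_mset (\<subseteq>) {#X,Y',Z'#} {#A,B,C#}"
    if P: "(U \<subseteq> gg k TB \<and> V \<subseteq> gg k TC) \<or> (U \<subseteq> gg k TC \<and> V \<subseteq> gg k TB)
    \<or> (\<exists>i\<in>{1..k}. U \<subseteq> gg k (TA i) \<and> V \<subseteq> gg k (TD i))
    \<or> (\<exists>i\<in>{1..k}. V \<subseteq> gg k (TA i) \<and> U \<subseteq> gg k (TD i))"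
    and W: "W \<subseteq> labs k"
    and perm: "\<And>A B C. U \<subseteq> A \<Longrightarrow> V \<subseteq> B \<Longrightarrow> W \<subseteq> C \<Longrightarrow> rel_mset (\<subseteq>) {#X,Y',Z'#} {#A,B,C#}"
    for U V W
  proof -
    have e: "{#A,B,C#} = {#B,A,C#}" for A B C :: "rl set" by (simp add: add_mset_commute)
    from P show ?thesis
    proof (elim disjE conjE bexE)
      assume "U \<subseteq> gg k TB" "V \<subseteq> gg k TC"
      then show ?thesis using perm[OF _ _ W] T0 by blast
    next
      assume "U \<subseteq> gg k TC" "V \<subseteq> gg k TB"
      then have "rel_mset (\<subseteq>) {#X,Y',Z'#} {#gg k TB, gg k TC, labs k#}"
        using perm[OF _ _ W] e by metis
      then show ?thesis using T0 by blast
    next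
      fix i assume "i \<in> {1..k}" "U \<subseteq> gg k (TA i)" "V \<subseteq> gg k (TD i)"
      then show ?thesis using perm[OF _ _ W] Ti by blast
    next
      fix i assume "i \<in> {1..k}" "V \<subseteq> gg k (TA i)" "U \<subseteq> gg k (TD i)"
      then have "rel_mset (\<subseteq>) {#X,Y',Z'#} {#gg k (TA i), gg k (TD i), labs k#}"
        using perm[OF _ _ W] e by metis
      then show ?thesis using Ti \<open>i \<in> {1..k}\<close> by blast
    qed
  qed
  from bic_of_good[OF good] consider "\<forall>x\<in>X. \<forall>y\<in>Y'. F x y" | "\<forall>x\<in>X. \<forall>z\<in>Z'. F x z" | "\<forall>y\<in>Y'. \<forall>z\<in>Z'. F y z"
    by blast
  then show ?thesis
  proof cases
    case 1
    show ?thesis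
      by (rule pair[OF bic_dom[OF ne(1,2) sub(1,2) 1] sub(3)]) (rule perm_rel; blast)
  next
    case 2
    show ?thesis
      by (rule pair[OF bic_dom[OF ne(1,3) sub(1,3) 2] sub(2)]) (rule perm_rel; blast)
  next
    case 3
    show ?thesis
      by (rule pair[OF bic_dom[OF ne(2,3) sub(2,3) 3] sub(1)]) (rule perm_rel; blast)
  qed
qed

lemma nodeC_REbar_Rp: "nodeC (REbar (Rp k)) = (\<lambda>(X,Y,Z). {#X,Y,Z#}) ` TRk k"
proof -
  have nodes: "{#x, y, z#} \<in> nodeC (Rp k) \<longleftrightarrow> F x y \<or> F x z \<or> F y z"
    if "x \<in> labels (Rp k)" "y \<in> labels (Rp k)" "z \<in> labels (Rp k)" for x y z
    using N3_Rp that unfolding labels_Rp by blast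
  show ?thesis
    apply (rule REbar_compute[OF nodes])
         apply assumption+
    unfolding labels_Rp
        apply (erule tr_ok_Rp)
       apply (erule cl1_Rp; assumption)
      apply (erule cl2_Rp; assumption)
     apply (erule cl3_Rp; assumption)
    apply (rule dom_Rp; assumption)
    done
qed


lemma nodeC_target_Suc: "nodeC (target (Suc k)) = insert {#TB, TC, TD (Suc k)#} ((\<lambda>i. {#TA i, TD i, TD (Suc k)#}) ` {1..k})"
  by (auto simp: nodeC_target_pos)

lemma TRk_image: "(\<lambda>(X,Y,Z). {#X,Y,Z#}) ` TRk k
   = insert {#gg k TB, gg k TC, labs k#} ((\<lambda>i. {#gg k (TA i), gg k (TD i), labs k#}) ` {1..k})"
  unfolding TRk_def image_insert image_image by simp

lemma nodeC_REbar_Rp': "nodeC (REbar (Rp k)) = image_mset (gg k) ` nodeC (target (Suc k))"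
  unfolding nodeC_REbar_Rp TRk_image nodeC_target_Suc image_insert image_image
  by (simp add: gg_top del: gg.simps)

lemma labels_target_Suc: "labels (target (Suc k)) = {TB, TC, TD (Suc k)} \<union> TA ` {1..k} \<union> TD ` {1..k}"
proof -
  have "{1..Suc k} = insert (Suc k) {1..k}" by auto
  then show ?thesis unfolding labels_target by auto
qed

lemma labels_REbar_Rp: "labels (REbar (Rp k)) = gg k ` labels (target (Suc k))"
proof -
  have "labels (REbar (Rp k)) = {gg k TB, gg k TC, labs k} \<union> (\<Union>i\<in>{1..k}. {gg k (TA i), gg k (TD i), labs k})"
    unfolding REbar_parts(2)[of "Rp k"] nodeC_REbar_Rp TRk_image by simp
  also have "\<dots> = gg k ` labels (target (Suc k))"
    unfolding labels_target_Suc image_Un image_insert image_empty image_image gg_top by blast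
  finally show ?thesis .
qed

lemma edge_Rp_iff: "{#u,v#} \<in> edgeC (Rp k) \<longleftrightarrow> (u = XB \<and> v = XC) \<or> (u = XC \<and> v = XB)
   \<or> (\<exists>j\<in>{1..k}. (u = Y j \<and> v = Z j) \<or> (u = Z j \<and> v = Y j))"
  unfolding edgeC_Rp' by (auto simp: mset2_eq)

lemma hw: "Suc 0 \<le> i \<Longrightarrow> i < j \<Longrightarrow> i \<le> k \<Longrightarrow> \<exists>a\<in>Y ` {Suc 0..k} \<union> Z ` {Suc 0..<j}. \<exists>b\<in>{i..k}. a = Z b"
  by (rule bexI[of _ "Z i"]) auto

lemma edge_choice:
  assumes a: "a \<in> labels (target (Suc k))" and b: "b \<in> labels (target (Suc k))"
  shows "some_choice_in {#gg k a, gg k b#} (edgeC (Rp k)) \<longleftrightarrow> Tc (Suc k) a b"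
  using a b unfolding some2 edge_Rp_iff labels_target_Suc Tc_def
  apply (cases a; cases b)
  apply auto
  apply (rule hw; simp)+
  done


lemma edgeC_REbar_Rp: "edgeC (REbar (Rp k)) = image_mset (gg k) ` edgeC (target (Suc k))"
proof
  show "edgeC (REbar (Rp k)) \<subseteq> image_mset (gg k) ` edgeC (target (Suc k))"
  proof
    fix M assume "M \<in> edgeC (REbar (Rp k))"
    then have M: "size M = 2" "set_mset M \<subseteq> gg k ` labels (target (Suc k))" "some_choice_in M (edgeC (Rp k))"
      unfolding REbar_parts(3)[of "Rp k"] labels_REbar_Rp by auto
    obtain X1 X2 where X: "M = {#X1, X2#}" using size2_eq[OF M(1)] by blast
    then obtain a b where ab: "a \<in> labels (target (Suc k))" "b \<in> labels (target (Suc k))" "X1 = gg k a" "X2 = gg k b"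
      using M(2) by auto
    have "Tc (Suc k) a b" using M(3) edge_choice[OF ab(1,2)] X ab by simp
    then have "{#a,b#} \<in> edgeC (target (Suc k))" using edgeC_target by blast
    moreover have "M = image_mset (gg k) {#a,b#}" using X ab by simp
    ultimately show "M \<in> image_mset (gg k) ` edgeC (target (Suc k))" by blast
  qed
next
  show "image_mset (gg k) ` edgeC (target (Suc k)) \<subseteq> edgeC (REbar (Rp k))"
  proof
    fix M assume "M \<in> image_mset (gg k) ` edgeC (target (Suc k))"
    then obtain M0 where M0: "M0 \<in> edgeC (target (Suc k))" "M = image_mset (gg k) M0" by blast
    then obtain a b where ab: "M0 = {#a,b#}" using edgeC_target_form by blast
    have T: "Tc (Suc k) a b" using M0(1) ab edgeC_target by simp
    have L: "a \<in> labels (target (Suc k))" "b \<in> labels (target (Suc k))"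
      using WF_target[of "Suc k"] M0(1) ab unfolding WF_def by auto
    have "some_choice_in M (edgeC (Rp k))" using edge_choice[OF L] T M0(2) ab by simp
    moreover have "size M = 2" "set_mset M \<subseteq> gg k ` labels (target (Suc k))" using M0(2) ab L by auto
    ultimately show "M \<in> edgeC (REbar (Rp k))"
      unfolding REbar_parts(3)[of "Rp k"] labels_REbar_Rp by simp
  qed
qed

lemma REbar_Rp: "REbar (Rp k) = rename (gg k) (target (Suc k))"
  by (rule problem_eqI) (simp_all add: labels_REbar_Rp nodeC_REbar_Rp' edgeC_REbar_Rp)

lemma WF_Rp: "WF (Rp k)"
  unfolding WF_def labels_Rp nodeC_Rp edgeC_Rp' labs_def by auto

lemma inj_rr: "inj_on (rr k) (labs k)"
proof (rule inj_onI)
  fix a b assume a: "a \<in> labs k" and b: "b \<in> labs k" and e: "rr k a = rr k b"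
  show "a = b"
  proof (cases a)
    case XB then show ?thesis using b e unfolding labs_def by (cases b) auto
  next
    case XC then show ?thesis using b e unfolding labs_def by (cases b) auto
  next
    case (Y m)
    show ?thesis
    proof (cases b)
      case (Y m')
      have "m \<le> m'"
      proof (rule ccontr)
        assume "\<not> m \<le> m'"
        then have "TA m' \<in> rr k a" using \<open>a = Y m\<close> b \<open>b = Y m'\<close> unfolding labs_def by auto
        moreover have "TA m' \<notin> rr k b" using \<open>b = Y m'\<close> by auto
        ultimately show False using e by simp
      qed
      moreover have "m' \<le> m"
      proof (rule ccontr)
        assume "\<not> m' \<le> m"
        then have "TA m \<in> rr k b" using \<open>a = Y m\<close> a \<open>b = Y m'\<close> unfolding labs_def by auto
        moreover have "TA m \<notin> rr k a" using \<open>a = Y m\<close> by auto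
        ultimately show False using e by simp
      qed
      ultimately show ?thesis using \<open>a = Y m\<close> \<open>b = Y m'\<close> by simp
    qed (use Y e in auto)
  next
    case (Z j)
    show ?thesis
    proof (cases b)
      case (Z j')
      have "TD j \<in> rr k a" "TD j' \<in> rr k b" using a b \<open>a = Z j\<close> \<open>b = Z j'\<close> unfolding labs_def by auto
      then have "TD j \<in> rr k b" "TD j' \<in> rr k a" using e by auto
      then have "j' \<le> j" "j \<le> j'" using \<open>a = Z j\<close> \<open>b = Z j'\<close> by auto
      then show ?thesis using \<open>a = Z j\<close> \<open>b = Z j'\<close> by simp
    next
      case XB
      have "TB \<in> rr k b" using XB by simp
      then show ?thesis using e Z by auto
    next
      case XC
      have "TC \<in> rr k b" using XC by simp
      then show ?thesis using e Z by auto
    next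
      case (Y m)
      have "TB \<in> rr k b" using Y by simp
      then show ?thesis using e Z by auto
    qed
  qed
qed

lemma inj_gg: "inj_on (gg k) (labels (target (Suc k)))"
proof (rule inj_onI)
  fix a b assume a: "a \<in> labels (target (Suc k))" and b: "b \<in> labels (target (Suc k))" and e: "gg k a = gg k b"
  have XB: "XB \<in> gg k a \<longleftrightarrow> XB \<in> gg k b" and XC: "XC \<in> gg k a \<longleftrightarrow> XC \<in> gg k b" using e by auto
  show "a = b"
  proof (cases a)
    case TB then show ?thesis using XB XC by (cases b) auto
  next
    case TC then show ?thesis using XB XC by (cases b) auto
  next
    case (TA i)
    then have ik: "1 \<le> i" "i \<le> k" using a unfolding labels_target_Suc by auto
    show ?thesis
    proof (cases b)
      case (TA i')
      then have ik': "1 \<le> i'" "i' \<le> k" using b unfolding labels_target_Suc by auto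
      have "Y i \<in> gg k a" "Y i' \<in> gg k b" using ik ik' \<open>a = TA i\<close> \<open>b = TA i'\<close> by auto
      then have "Y i \<in> gg k b" "Y i' \<in> gg k a" using e by auto
      then have "i' \<le> i" "i \<le> i'" using \<open>a = TA i\<close> \<open>b = TA i'\<close> by auto
      then show ?thesis using \<open>a = TA i\<close> \<open>b = TA i'\<close> by simp
    qed (use TA XB XC in auto)
  next
    case (TD i)
    show ?thesis
    proof (cases b)
      case (TD i')
      have "i \<le> i'"
      proof (rule ccontr)
        assume "\<not> i \<le> i'"
        then have "Z i' \<in> gg k a" using \<open>a = TD i\<close> b \<open>b = TD i'\<close> unfolding labels_target_Suc by auto
        moreover have "Z i' \<notin> gg k b" using \<open>b = TD i'\<close> by auto
        ultimately show False using e by simp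
      qed
      moreover have "i' \<le> i"
      proof (rule ccontr)
        assume "\<not> i' \<le> i"
        then have "Z i \<in> gg k b" using \<open>a = TD i\<close> a \<open>b = TD i'\<close> unfolding labels_target_Suc by auto
        moreover have "Z i \<notin> gg k a" using \<open>a = TD i\<close> by auto
        ultimately show False using e by simp
      qed
      ultimately show ?thesis using \<open>a = TD i\<close> \<open>b = TD i'\<close> by simp
    qed (use TD XB XC in auto)
  qed
qed


lemma inj_enc: "inj_on enc {X. finite X}"
proof (rule inj_onI)
  fix X Y assume "X \<in> {X. finite X}" "Y \<in> {X. finite X}" "enc X = enc Y"
  then show "X = Y" unfolding enc_def by (simp add: Abs_fset_inject)
qed

lemma finite_rr: "finite (rr k a)"
  by (cases a) auto

lemma finite_gg: "finite (gg k t)"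
  by (cases t) auto

lemma step:
  assumes inj: "inj_on h (labels (target k))"
  shows "\<exists>h'. inj_on h' (labels (target (Suc k))) \<and> Q (rename h (target k)) = rename h' (target (Suc k))"
proof -
  let ?T = "target k"
  let ?phi = "enc \<circ> (image h \<circ> rr k)"
  have RE1: "RE (rename h ?T) = rename (image h \<circ> rr k) (Rp k)"
    using RE_rename[OF WF_target inj] RE_target rename_rename by metis
  have inj_phi: "inj_on ?phi (labs k)"
  proof (rule comp_inj_on)
    have "rr k ` labs k \<subseteq> Pow (labels ?T)"
      using labels_RE_Pow[of ?T] unfolding labels_RE_target .
    then show "inj_on (image h \<circ> rr k) (labs k)"
      using comp_inj_on[OF inj_rr] inj_on_image_Pow[OF inj] inj_on_subset by metis
    show "inj_on enc ((image h \<circ> rr k) ` labs k)"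
      by (rule inj_on_subset[OF inj_enc]) (auto simp: finite_rr)
  qed
  have "Q (rename h ?T) = rename enc (REbar (rename ?phi (Rp k)))"
    unfolding Q_def RE1 rename_rename ..
  also have "\<dots> = rename enc (rename (image ?phi) (rename (gg k) (target (Suc k))))"
    using REbar_rename[OF WF_Rp, of ?phi] inj_phi REbar_Rp unfolding labels_Rp by simp
  also have "\<dots> = rename (enc \<circ> (image ?phi \<circ> gg k)) (target (Suc k))"
    unfolding rename_rename ..
  finally have eq: "Q (rename h ?T) = rename (enc \<circ> (image ?phi \<circ> gg k)) (target (Suc k))" .
  have "inj_on (enc \<circ> (image ?phi \<circ> gg k)) (labels (target (Suc k)))"
  proof (rule comp_inj_on)
    have "gg k ` labels (target (Suc k)) \<subseteq> Pow (labs k)"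
      using labels_REbar_Pow[of "Rp k"] unfolding labels_REbar_Rp labels_Rp .
    then show "inj_on (image ?phi \<circ> gg k) (labels (target (Suc k)))"
      using comp_inj_on[OF inj_gg] inj_on_image_Pow[OF inj_phi] inj_on_subset by metis
    show "inj_on enc ((image ?phi \<circ> gg k) ` labels (target (Suc k)))"
      by (rule inj_on_subset[OF inj_enc]) (auto simp: finite_gg)
  qed
  then show ?thesis using eq by (intro exI[where x = "enc \<circ> (image ?phi \<circ> gg k)"] conjI)
qed

lemma base: "\<exists>h. inj_on h (labels (target 0)) \<and> SSO = rename h (target 0)"
proof -
  let ?h = "\<lambda>t. if t = TB then Atom 0 else Atom 1"
  have inj: "inj_on ?h (labels (target 0))" unfolding labels_target by (auto simp: inj_on_def)
  have N: "nodeC SSO = image_mset ?h ` nodeC (target 0)"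
  proof
    show "nodeC SSO \<subseteq> image_mset ?h ` nodeC (target 0)"
    proof
      fix M assume "M \<in> nodeC SSO"
      then have M: "size M = 3" "set_mset M \<subseteq> {Atom 0, Atom 1}" "Atom 0 \<in># M" "Atom 1 \<in># M"
        by (auto simp: SSO_def nodeC_def)
      obtain a b c where abc: "M = {#a,b,c#}" using size3_eq[OF M(1)] by blast
      then have "a \<in> {Atom 0, Atom 1}" "b \<in> {Atom 0, Atom 1}" "c \<in> {Atom 0, Atom 1}" using M(2) by auto
      then have "M = {#Atom 0, Atom 1, Atom 0#} \<or> M = {#Atom 0, Atom 1, Atom 1#}"
        using M(3,4) abc by (auto simp: add_mset_commute)
      then show "M \<in> image_mset ?h ` nodeC (target 0)"
        unfolding nodeC_target_0 by auto
    qed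
  next
    show "image_mset ?h ` nodeC (target 0) \<subseteq> nodeC SSO"
      unfolding nodeC_target_0 by (auto simp: SSO_def nodeC_def)
  qed
  have eqS: "SSO = rename ?h (target 0)"
    by (rule problem_eqI)
      (simp_all add: N, auto simp: SSO_def labels_def edgeC_def target_def)
  show ?thesis by (rule exI[where x = ?h]) (rule conjI[OF inj eqS])
qed

lemma main_inv: "\<exists>h. inj_on h (labels (target k)) \<and> (Q ^^ k) SSO = rename h (target k)"
proof (induction k)
  case 0
  then show ?case using base by simp
next
  case (Suc k)
  then obtain h where h: "inj_on h (labels (target k))" "(Q ^^ k) SSO = rename h (target k)" by blast
  from step[OF h(1)] obtain h' where h': "inj_on h' (labels (target (Suc k)))"
    "Q (rename h (target k)) = rename h' (target (Suc k))" by blast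
  have "(Q ^^ Suc k) SSO = rename h' (target (Suc k))" using h(2) h'(2) by simp
  then show ?case using h'(1) by blast
qed

lemma img_id: "(\<And>x. x \<in> A \<Longrightarrow> g x = x) \<Longrightarrow> g ` A = A"
proof -
  assume a: "\<And>x. x \<in> A \<Longrightarrow> g x = x"
  have "g ` A = id ` A" by (rule image_cong) (simp_all add: a)
  then show ?thesis by simp
qed

lemma iso_rename:
  assumes wf: "WF P" and inj: "inj_on h (labels P)"
  shows "iso_problem (rename h P) P"
  unfolding iso_problem_def
proof (intro exI conjI)
  let ?f = "inv_into (labels P) h"
  show "bij_betw ?f (labels (rename h P)) (labels P)"
    using bij_betw_inv_into[OF inj_on_imp_bij_betw[OF inj]] by simp
  have id: "image_mset ?f (image_mset h M) = M" if "set_mset M \<subseteq> labels P" for M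
    by (rule inv_image_mset[OF inj that])
  show "image_mset ?f ` nodeC (rename h P) = nodeC P"
  proof -
    have "image_mset ?f ` nodeC (rename h P) = (\<lambda>M. image_mset ?f (image_mset h M)) ` nodeC P"
      by (simp add: image_image)
    also have "\<dots> = nodeC P" by (rule img_id) (use wf id in \<open>unfold WF_def, blast\<close>)
    finally show ?thesis .
  qed
  show "image_mset ?f ` edgeC (rename h P) = edgeC P"
  proof -
    have "image_mset ?f ` edgeC (rename h P) = (\<lambda>M. image_mset ?f (image_mset h M)) ` edgeC P"
      by (simp add: image_image)
    also have "\<dots> = edgeC P" by (rule img_id) (use wf id in \<open>unfold WF_def, blast\<close>)
    finally show ?thesis .
  qed
qed

theorem mainTheorem16:
  fixes k :: nat
  shows "iso_problem ((Q ^^ k) SSO) (target k)"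
proof -
  obtain h where h: "inj_on h (labels (target k))" "(Q ^^ k) SSO = rename h (target k)"
    using main_inv by blast
  show ?thesis unfolding h(2) by (rule iso_rename[OF WF_target h(1)])
qed


end
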